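(* Let $\mathbf{H}$ be the gap-insertion Hopf algebra of noncrossing partitions with convolution product $\star$ on $\mathbf H^*$, let $e$ be the infinitesimal character with $e(P)=1$ for one-block noncrossing partitions $P$ and $e(P)=0$ on other noncrossing partitions, and put $\psi_\star=\exp_\star(e)=\sum_{m\geq0}e^{\star m}/m!$. Let $\kappa$ be an infinitesimal character of $\mathbf{H}$ and $K$ the character of $\mathbf{B}$ with $K(P)=\kappa(P)$ for all nonempty noncrossing $P$. Then for every character $\phi$ of $\mathbf H$, $$\phi=\exp_\star(\kappa)\iff\phi=\psi_\star\curvearrowleft K.$$
   Context: Noncrossing partitions of $[n]$: no $a<c<b<d$ with $a,b$ in one block and $c,d$ in another; partitions of finite linearly ordered sets identified with partitions of $[n]$ via the order-preserving bijection; $P_{|X}$ induced partition. $\operatorname{Conv}(X)=\{\min X,\dots,\max X\}$; on blocks $\pi\to\rho$ iff $\operatorname{Conv}(\pi)\cap\rho\neq\emptyset$ (transitively closed). Upperset $U$: ($\pi\in U,\pi\to\rho$)$\Rightarrow\rho\in U$; lowerset $L$: ($\pi\in L,\sigma\to\pi$)$\Rightarrow\sigma\in L$. Cut $(L,U)$: lowerset $L$, complement $U$; $L$ identified with the restriction of $P$ to the union of its blocks, elements $x_1<\dots<x_k$; $D_0=\{y<x_1\}$, $D_i=\{x_i<y<x_{i+1}\}$, $D_k=\{y>x_k\}$, $U_i=P_{|D_i}$, $\overline U$ ordered product of nonempty $U_i$. $\mathbf H$: free associative unital algebra on nonempty noncrossing partitions, basis of multipartitions (shift-concatenated), cuts of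 multipartitions are tuples of cuts with $L=L_1\cdots L_r$, $\overline U=\overline{U_1}\cdots\overline{U_r}$. Coproduct $\Delta(P)=\sum_{\text{cuts}}L\otimes\overline U$, counit $\varepsilon$ ($1$ on $\mathbf1$, $0$ on nonempty monomials); $f\star g=(f\otimes g)\circ\Delta$. Characters: unital algebra maps to $\mathbb K$; infinitesimal characters: linear forms vanishing on $\mathbf1$ and on products of two nonempty monomials. $\mathbf B$: free commutative unital algebra on nonempty noncrossing partitions. For noncrossing $P\leq Q$ (refinement), $Q=\{\tau_1,\dots,\tau_l\}$, $P/Q=P_{|\tau_1}\cdots P_{|\tau_l}$. Coaction $\rho:\mathbf H\to\mathbf H\otimes\mathbf B$, algebra morphism with $\rho(P)=\sum_{Q\geq P\text{ noncrossing}}Q\otimes P/Q$; $\alpha\curvearrowleft\phi=(\alpha\otimes\phi)\circ\rho$. *)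

theory Defs
  imports Main "HOL-Library.Disjoint_Sets" "HOL-Library.Multiset"
begin

type_synonym ncpart = "nat set set"

definition noncrossing :: "ncpart \<Rightarrow> bool" where
  "noncrossing P \<longleftrightarrow>
     (\<forall>B1\<in>P. \<forall>B2\<in>P. B1 \<noteq> B2 \<longrightarrow>
        \<not> (\<exists>a b c d. a \<in> B1 \<and> b \<in> B1 \<and> c \<in> B2 \<and> d \<in> B2 \<and> a < c \<and> c < b \<and> b < d))"

definition ncp :: "nat \<Rightarrow> ncpart \<Rightarrow> bool" where
  "ncp n P \<longleftrightarrow> partition_on {1..n} P \<and> noncrossing P"

definition nonempty_ncp :: "ncpart \<Rightarrow> bool" where
  "nonempty_ncp P \<longleftrightarrow> (\<exists>n\<ge>1. ncp n P)"

text \<open>Basis monomials of H (multipartitions): words of nonempty noncrossing partitions.\<close>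
definition valid_word :: "ncpart list \<Rightarrow> bool" where
  "valid_word w \<longleftrightarrow> list_all nonempty_ncp w"

text \<open>Order-preserving identification of a finite set X of naturals with {1..card X}.\<close>
definition rank :: "nat set \<Rightarrow> nat \<Rightarrow> nat" where
  "rank X x = card {y\<in>X. y \<le> x}"

definition std :: "nat set \<Rightarrow> ncpart \<Rightarrow> ncpart" where
  "std X Q = (\<lambda>B. rank X ` B) ` Q"

definition restr :: "ncpart \<Rightarrow> nat set \<Rightarrow> ncpart" where
  "restr P X = {B \<inter> X | B. B \<in> P \<and> B \<inter> X \<noteq> {}}"

text \<open>Restriction followed by standardisation: P_{|X} as a partition of [card X].\<close>
definition induced :: "ncpart \<Rightarrow> nat set \<Rightarrow> ncpart" where
  "induced P X = std X (restr P X)"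

definition Conv :: "nat set \<Rightarrow> nat set" where
  "Conv X = {Min X..Max X}"

definition arrow :: "ncpart \<Rightarrow> nat set \<Rightarrow> nat set \<Rightarrow> bool" where
  "arrow P = tranclp (\<lambda>\<pi> \<rho>. \<pi> \<in> P \<and> \<rho> \<in> P \<and> Conv \<pi> \<inter> \<rho> \<noteq> {})"

definition lowerset :: "ncpart \<Rightarrow> ncpart \<Rightarrow> bool" where
  "lowerset P L \<longleftrightarrow> L \<subseteq> P \<and> (\<forall>\<pi>\<in>L. \<forall>\<sigma>. arrow P \<sigma> \<pi> \<longrightarrow> \<sigma> \<in> L)"

text \<open>Cuts (L,U) are determined by the lowerset L (U = P - L).\<close>
definition cuts :: "ncpart \<Rightarrow> ncpart set" where
  "cuts P = {L. lowerset P L}"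

text \<open>Left factor: the partition L (restriction of P to the union of its blocks),
  the empty partition being the unit (empty word).\<close>
definition lword :: "ncpart \<Rightarrow> ncpart \<Rightarrow> ncpart list" where
  "lword P L = (if L = {} then [] else [induced P (\<Union>L)])"

text \<open>Gap D_i, i = 0..k, where x_1 < ... < x_k are the elements of the union of L
  (list index shifted by one).\<close>
definition gap :: "ncpart \<Rightarrow> ncpart \<Rightarrow> nat \<Rightarrow> nat set" where
  "gap P L i = (let xs = sorted_list_of_set (\<Union>L); k = length xs in
     {y \<in> \<Union>P. y \<notin> \<Union>L \<and> (i = 0 \<or> xs ! (i - 1) < y) \<and> (i = k \<or> y < xs ! i)})"

text \<open>Right factor: ordered product of the nonempty U_i = P_{|D_i}.\<close>
definition uword :: "ncpart \<Rightarrow> ncpart \<Rightarrow> ncpart list" where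
  "uword P L = [induced P (gap P L i). i \<leftarrow> [0..<card (\<Union>L) + 1], gap P L i \<noteq> {}]"

text \<open>Convolution: (f * g)(w) = (f (x) g)(Delta w), Delta multiplicative,
  sum over tuples of cuts.\<close>
definition conv :: "(ncpart list \<Rightarrow> 'a::comm_ring_1) \<Rightarrow> (ncpart list \<Rightarrow> 'a) \<Rightarrow> ncpart list \<Rightarrow> 'a" where
  "conv f g w = (\<Sum>Ls \<in> listset (map cuts w).
      f (concat (map2 lword w Ls)) * g (concat (map2 uword w Ls)))"

definition counit :: "ncpart list \<Rightarrow> 'a::comm_ring_1" where
  "counit w = (if w = [] then 1 else 0)"

primrec conv_pow :: "(ncpart list \<Rightarrow> 'a::comm_ring_1) \<Rightarrow> nat \<Rightarrow> ncpart list \<Rightarrow> 'a" where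
  "conv_pow f 0 = counit"
| "conv_pow f (Suc m) = conv f (conv_pow f m)"

text \<open>exp_*(f) = sum_m f^{*m}/m!, evaluated pointwise as the sum of the (finitely many)
  nonzero terms.\<close>
definition exp_conv :: "(ncpart list \<Rightarrow> 'a::field_char_0) \<Rightarrow> ncpart list \<Rightarrow> 'a" where
  "exp_conv f w = (\<Sum>m \<in> {m. conv_pow f m w \<noteq> 0}. conv_pow f m w / fact m)"

definition is_character :: "(ncpart list \<Rightarrow> 'a::comm_ring_1) \<Rightarrow> bool" where
  "is_character \<phi> \<longleftrightarrow> \<phi> [] = 1 \<and> (\<forall>w. valid_word w \<longrightarrow> \<phi> w = (\<Prod>P\<leftarrow>w. \<phi> [P]))"

definition is_inf_character :: "(ncpart list \<Rightarrow> 'a::comm_ring_1) \<Rightarrow> bool" where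
  "is_inf_character \<kappa> \<longleftrightarrow> \<kappa> [] = 0 \<and>
     (\<forall>u v. valid_word u \<and> valid_word v \<and> u \<noteq> [] \<and> v \<noteq> [] \<longrightarrow> \<kappa> (u @ v) = 0)"

definition e_char :: "ncpart list \<Rightarrow> 'a::comm_ring_1" where
  "e_char w = (case w of [P] \<Rightarrow> (if card P = 1 then 1 else 0) | _ \<Rightarrow> 0)"

text \<open>Monomials of B: multisets of nonempty noncrossing partitions; a character of B
  is the multiplicative extension of its values on generators.\<close>
definition charB :: "(ncpart \<Rightarrow> 'a::comm_ring_1) \<Rightarrow> ncpart multiset \<Rightarrow> 'a" where
  "charB K M = (\<Prod>P \<in># M. K P)"

definition refines :: "ncpart \<Rightarrow> ncpart \<Rightarrow> bool" where
  "refines P Q \<longleftrightarrow> (\<forall>B\<in>P. \<exists>C\<in>Q. B \<subseteq> C)"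

definition coarsenings :: "ncpart \<Rightarrow> ncpart set" where
  "coarsenings P = {Q. partition_on (\<Union>P) Q \<and> noncrossing Q \<and> refines P Q}"

definition quot :: "ncpart \<Rightarrow> ncpart \<Rightarrow> ncpart multiset" where
  "quot P Q = image_mset (\<lambda>\<tau>. induced P \<tau>) (mset_set Q)"

text \<open>(alpha <- K)(w) = (alpha (x) K)(rho w), rho multiplicative on words.\<close>
definition act :: "(ncpart list \<Rightarrow> 'a::comm_ring_1) \<Rightarrow> (ncpart \<Rightarrow> 'a) \<Rightarrow> ncpart list \<Rightarrow> 'a" where
  "act \<alpha> K w = (\<Sum>Qs \<in> listset (map coarsenings w).
      \<alpha> Qs * charB K (sum_list (map2 quot w Qs)))"

end

theory Submission
  imports Defs
begin



lemma rank_less: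
  assumes "finite X" "x \<in> X" "y \<in> X" "x < y"
  shows "rank X x < rank X y"
proof -
  have "y \<in> {z\<in>X. z \<le> y}" "y \<notin> {z\<in>X. z \<le> x}" using assms by auto
  moreover have "{z\<in>X. z \<le> x} \<subseteq> {z\<in>X. z \<le> y}" using assms by auto
  ultimately have "{z\<in>X. z \<le> x} \<subset> {z\<in>X. z \<le> y}" by blast
  then show ?thesis unfolding rank_def using assms(1) by (intro psubset_card_mono) auto
qed

lemma rank_le_iff:
  assumes "finite X" "x \<in> X" "y \<in> X"
  shows "rank X x \<le> rank X y \<longleftrightarrow> x \<le> y"
  using rank_less[OF assms(1,2,3)] rank_less[OF assms(1,3,2)]
  by (metis le_less not_less)

lemma rank_less_iff:
  assumes "finite X" "x \<in> X" "y \<in> X"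
  shows "rank X x < rank X y \<longleftrightarrow> x < y"
  using rank_le_iff[OF assms(1,3,2)] by auto

lemma inj_rank: "finite X \<Longrightarrow> inj_on (rank X) X"
  by (rule inj_onI) (metis rank_le_iff order_antisym order_refl)

lemma rank_pos: "finite X \<Longrightarrow> x \<in> X \<Longrightarrow> 1 \<le> rank X x"
proof -
  assume a: "finite X" "x \<in> X"
  have "x \<in> {y\<in>X. y \<le> x}" using a by simp
  moreover have "finite {y\<in>X. y \<le> x}" using a by simp
  ultimately have "card {y\<in>X. y \<le> x} > 0" using card_gt_0_iff by blast
  then show ?thesis unfolding rank_def by simp
qed

lemma rank_le_card: "finite X \<Longrightarrow> rank X x \<le> card X"
  unfolding rank_def by (intro card_mono) auto

lemma rank_image: "finite X \<Longrightarrow> rank X ` X = {1..card X}"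
proof -
  assume f: "finite X"
  have sub: "rank X ` X \<subseteq> {1..card X}" using rank_pos[OF f] rank_le_card[OF f] by auto
  have "card (rank X ` X) = card X" using card_image[OF inj_rank[OF f]] .
  then have "card (rank X ` X) = card {1..card X}" by simp
  then show ?thesis using sub by (intro card_subset_eq) auto
qed

lemma bij_rank: "finite X \<Longrightarrow> bij_betw (rank X) X {1..card X}"
  using inj_rank rank_image by (auto simp: bij_betw_def)

lemma rank_interval: "x \<in> {1..n} \<Longrightarrow> rank {1..n} x = x"
  unfolding rank_def by (subgoal_tac "{y \<in> {1..n}. y \<le> x} = {1..x}") auto

section \<open>noncrossing under maps\<close>

lemma noncrossingD:
  assumes "noncrossing P" "B1 \<in> P" "B2 \<in> P" "B1 \<noteq> B2"
    "a \<in> B1" "b \<in> B1" "c \<in> B2" "d \<in> B2" "a < c" "c < b" "b < d"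
  shows False
proof -
  have "\<forall>B1\<in>P. \<forall>B2\<in>P. B1 \<noteq> B2 \<longrightarrow>
        \<not> (\<exists>a b c d. a \<in> B1 \<and> b \<in> B1 \<and> c \<in> B2 \<and> d \<in> B2 \<and> a < c \<and> c < b \<and> b < d)"
    using assms(1) unfolding noncrossing_def .
  from this[rule_format, OF assms(2-4)] have "\<not> (\<exists>a b c d. a \<in> B1 \<and> b \<in> B1 \<and> c \<in> B2 \<and> d \<in> B2 \<and> a < c \<and> c < b \<and> b < d)" .
  moreover have "\<exists>a b c d. a \<in> B1 \<and> b \<in> B1 \<and> c \<in> B2 \<and> d \<in> B2 \<and> a < c \<and> c < b \<and> b < d"
    using assms(5-11) by blast
  ultimately show False by blast
qed

lemma noncrossing_subset_blocks:
  assumes "noncrossing P" 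
    and "\<And>B. B \<in> R \<Longrightarrow> \<exists>C\<in>P. B \<subseteq> C"
    and "\<And>B1 B2 C1 C2. B1 \<in> R \<Longrightarrow> B2 \<in> R \<Longrightarrow> C1 \<in> P \<Longrightarrow> C2 \<in> P \<Longrightarrow> B1 \<subseteq> C1 \<Longrightarrow> B2 \<subseteq> C2 \<Longrightarrow> B1 \<noteq> B2 \<Longrightarrow> C1 \<noteq> C2"
  shows "noncrossing R"
  unfolding noncrossing_def
proof (intro ballI impI notI)
  fix B1 B2 assume b: "B1 \<in> R" "B2 \<in> R" "B1 \<noteq> B2"
    and "\<exists>a b c d. a \<in> B1 \<and> b \<in> B1 \<and> c \<in> B2 \<and> d \<in> B2 \<and> a < c \<and> c < b \<and> b < d"
  then obtain a bb c d where x: "a \<in> B1" "bb \<in> B1" "c \<in> B2" "d \<in> B2" "a < c" "c < bb" "bb < d" by blast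
  obtain C1 C2 where c: "C1 \<in> P" "C2 \<in> P" "B1 \<subseteq> C1" "B2 \<subseteq> C2" using assms(2) b by meson
  have "C1 \<noteq> C2" using assms(3) b c by blast
  then show False using noncrossingD[OF assms(1) c(1,2) _ ] c x by blast
qed

lemma noncrossing_image:
  assumes "noncrossing R" and mono: "\<And>x y. x \<in> \<Union>R \<Longrightarrow> y \<in> \<Union>R \<Longrightarrow> x < y \<Longrightarrow> f x < f y"
  shows "noncrossing ((`) f ` R)"
  unfolding noncrossing_def
proof (intro ballI impI notI)
  fix B1 B2 assume b: "B1 \<in> (`) f ` R" "B2 \<in> (`) f ` R" "B1 \<noteq> B2"
    and "\<exists>a b c d. a \<in> B1 \<and> b \<in> B1 \<and> c \<in> B2 \<and> d \<in> B2 \<and> a < c \<and> c < b \<and> b < d"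
  then obtain a bb c d where x: "a \<in> B1" "bb \<in> B1" "c \<in> B2" "d \<in> B2" "a < c" "c < bb" "bb < d" by blast
  obtain C1 C2 where c: "C1 \<in> R" "C2 \<in> R" "B1 = f ` C1" "B2 = f ` C2" using b by blast
  have ne: "C1 \<noteq> C2" using b c by blast
  obtain a' bb' c' d' where y: "a' \<in> C1" "bb' \<in> C1" "c' \<in> C2" "d' \<in> C2" "a = f a'" "bb = f bb'" "c = f c'" "d = f d'"
    using x c by blast
  have rev: "u < v" if "u \<in> \<Union>R" "v \<in> \<Union>R" "f u < f v" for u v
    using mono[OF that(2) that(1)] that(3) by (metis less_asym linorder_neqE_nat)
  have u: "a' \<in> \<Union>R" "bb' \<in> \<Union>R" "c' \<in> \<Union>R" "d' \<in> \<Union>R" using y c by auto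
  have fa: "f a' < f c'" "f c' < f bb'" "f bb' < f d'" using x(5-7) unfolding y(5-8) .
  have "a' < c'" using rev[OF u(1) u(3) fa(1)] .
  moreover have "c' < bb'" using rev[OF u(3) u(2) fa(2)] .
  moreover have "bb' < d'" using rev[OF u(2) u(4) fa(3)] .
  ultimately show False using noncrossingD[OF assms(1) c(1,2) ne y(1) y(2) y(3) y(4)] by blast
qed

section \<open>restriction and induced\<close>

lemma restr_eq: "restr P X = (\<inter>) X ` P - {{}}"
  unfolding restr_def by auto

lemma partition_restr: "partition_on A P \<Longrightarrow> X \<subseteq> A \<Longrightarrow> partition_on X (restr P X)"
proof -
  assume a: "partition_on A P" "X \<subseteq> A"
  have "X \<inter> A = X" using a(2) by blast
  then show ?thesis using partition_on_restrict[OF a(1), of X] unfolding restr_eq by simp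
qed

lemma noncrossing_restr:
  assumes "noncrossing P" "disjoint P"
  shows "noncrossing (restr P X)"
proof (rule noncrossing_subset_blocks[OF assms(1)])
  show "\<exists>C\<in>P. B \<subseteq> C" if "B \<in> restr P X" for B using that unfolding restr_def by auto
  show "C1 \<noteq> C2" if "B1 \<in> restr P X" "B2 \<in> restr P X" "C1 \<in> P" "C2 \<in> P" "B1 \<subseteq> C1" "B2 \<subseteq> C2" "B1 \<noteq> B2"
    for B1 B2 C1 C2
  proof
    assume "C1 = C2"
    from that(1) obtain D1 where d1: "D1 \<in> P" "B1 = D1 \<inter> X" "B1 \<noteq> {}" unfolding restr_def by auto
    from that(2) obtain D2 where d2: "D2 \<in> P" "B2 = D2 \<inter> X" "B2 \<noteq> {}" unfolding restr_def by auto
    have "D1 = C1" using assms(2) d1 that(3,5) unfolding disjoint_def by blast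
    moreover have "D2 = C2" using assms(2) d2 that(4,6) unfolding disjoint_def by blast
    ultimately show False using \<open>C1 = C2\<close> d1 d2 that(7) by simp
  qed
qed

lemma ncp_std:
  assumes "partition_on X R" "noncrossing R" "finite X"
  shows "ncp (card X) (std X R)"
proof -
  have "partition_on (rank X ` X) ((`) (rank X) ` R - {{}})"
    using partition_on_inj_image[OF assms(1) inj_rank[OF assms(3)]] .
  moreover have "(`) (rank X) ` R - {{}} = std X R"
    using assms(1) unfolding std_def partition_on_def by auto
  ultimately have p: "partition_on {1..card X} (std X R)" using rank_image[OF assms(3)] by simp
  have "noncrossing (std X R)" unfolding std_def
    using assms by (intro noncrossing_image) (auto simp: partition_on_def intro: rank_less)
  then show ?thesis using p unfolding ncp_def by simp
qed

lemma ncp_induced: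
  assumes "partition_on A P" "noncrossing P" "X \<subseteq> A" "finite X"
  shows "ncp (card X) (induced P X)"
  unfolding induced_def
  using assms partition_restr noncrossing_restr partition_onD2 by (intro ncp_std) blast+

lemma ncpD: "ncp n P \<Longrightarrow> partition_on {1..n} P" "ncp n P \<Longrightarrow> noncrossing P"
  unfolding ncp_def by auto

lemma ncp_union: "ncp n P \<Longrightarrow> \<Union>P = {1..n}"
  unfolding ncp_def partition_on_def by auto

lemma nonempty_ncpE:
  assumes "nonempty_ncp P"
  obtains n where "n \<ge> 1" "ncp n P"
  using assms unfolding nonempty_ncp_def by blast

lemma nonempty_ncp_finite: "nonempty_ncp P \<Longrightarrow> finite P"
  by (metis finite_atLeastAtMost finite_elements ncpD(1) nonempty_ncpE)

lemma nonempty_ncp_union_finite: "nonempty_ncp P \<Longrightarrow> finite (\<Union>P)"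
  by (metis finite_atLeastAtMost ncp_union nonempty_ncpE)

lemma nonempty_ncp_induced:
  assumes "nonempty_ncp P" "X \<subseteq> \<Union>P" "X \<noteq> {}"
  shows "nonempty_ncp (induced P X)"
proof -
  obtain n where n: "n \<ge> 1" "ncp n P" using assms(1) by (rule nonempty_ncpE)
  have f: "finite X" using assms(2) ncp_union[OF n(2)] by (metis finite_subset finite_atLeastAtMost)
  have "ncp (card X) (induced P X)"
    using ncp_induced[OF ncpD(1)[OF n(2)] ncpD(2)[OF n(2)]] assms(2) ncp_union[OF n(2)] f by auto
  moreover have "card X \<ge> 1" using f assms(3) by (simp add: Suc_le_eq card_gt_0_iff)
  ultimately show ?thesis unfolding nonempty_ncp_def by blast
qed

lemma induced_self:
  assumes "ncp n P" shows "induced P (\<Union>P) = P"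
proof -
  have "restr P (\<Union>P) = P"
  proof -
    have "B \<inter> \<Union>P = B" if "B \<in> P" for B using that by blast
    moreover have "{} \<notin> P" using ncpD(1)[OF assms] unfolding partition_on_def by blast
    ultimately show ?thesis unfolding restr_def by force
  qed
  moreover have "std {1..n} P = P"
  proof -
    have "(\<lambda>B. rank {1..n} ` B) B = B" if "B \<in> P" for B
    proof -
      have "B \<subseteq> {1..n}" using that ncp_union[OF assms] by blast
      then have "rank {1..n} ` B = id ` B" using rank_interval by (intro image_cong) auto
      then show ?thesis by simp
    qed
    then show ?thesis unfolding std_def by simp
  qed
  ultimately show ?thesis unfolding induced_def by (metis ncp_union[OF assms])
qed




lemma listset_Cons': "listset (A#As) = (\<lambda>(x,xs). x#xs) ` (A \<times> listset As)"
  by (auto simp: set_Cons_def)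

lemma set_Cons': "set_Cons A B = (\<lambda>(x,xs). x#xs) ` (A \<times> B)"
  by (auto simp: set_Cons_def)

lemma sum_set_Cons:
  "(\<Sum>xs\<in>set_Cons A B. F xs) = (\<Sum>x\<in>A. \<Sum>xs\<in>B. F (x#xs))"
proof -
  have "inj_on (\<lambda>(x,xs). x#xs) (A \<times> B)" by (auto simp: inj_on_def)
  then have "(\<Sum>xs\<in>set_Cons A B. F xs) = (\<Sum>p\<in>A \<times> B. F ((\<lambda>(x,xs). x#xs) p))"
    unfolding set_Cons' by (simp add: sum.reindex)
  also have "\<dots> = (\<Sum>x\<in>A. \<Sum>xs\<in>B. F (x#xs))"
    by (simp add: sum.cartesian_product split_def)
  finally show ?thesis .
qed

lemma sum_listset_Cons:
  "(\<Sum>xs\<in>listset (A#As). F xs) = (\<Sum>x\<in>A. \<Sum>xs\<in>listset As. F (x#xs))"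
  by (simp add: sum_set_Cons)

lemma listset_length: "xs \<in> listset As \<Longrightarrow> length xs = length As"
  by (induction As arbitrary: xs) (auto simp: set_Cons_def)

lemma listset_nth: "xs \<in> listset As \<Longrightarrow> i < length As \<Longrightarrow> xs ! i \<in> As ! i"
  by (induction As arbitrary: xs i) (auto simp: set_Cons_def nth_Cons split: nat.splits)

lemma in_listset_iff: "xs \<in> listset As \<longleftrightarrow> length xs = length As \<and> (\<forall>i<length As. xs ! i \<in> As ! i)"
proof (induction As arbitrary: xs)
  case Nil then show ?case by auto
next
  case (Cons A As)
  show ?case
  proof (cases xs)
    case Nil then show ?thesis by (auto simp: set_Cons_def)
  next
    case (Cons y ys)
    have "xs \<in> listset (A#As) \<longleftrightarrow> y \<in> A \<and> ys \<in> listset As" using Cons by (auto simp: set_Cons_def)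
    also have "\<dots> \<longleftrightarrow> length xs = length (A#As) \<and> (\<forall>i<length (A#As). xs ! i \<in> (A#As) ! i)"
      using Cons.IH[of ys] Cons by (auto simp: nth_Cons split: nat.splits)
    finally show ?thesis .
  qed
qed

lemma finite_listset: "(\<And>A. A \<in> set As \<Longrightarrow> finite A) \<Longrightarrow> finite (listset As)"
  by (induction As) (auto simp: set_Cons')

lemma conv_Nil: "conv f g [] = f [] * g []"
  by (simp add: conv_def)

lemma conv_Cons:
  "conv f g (P#w) = (\<Sum>L\<in>cuts P. conv (\<lambda>v. f (lword P L @ v)) (\<lambda>v. g (uword P L @ v)) w)"
  unfolding conv_def by (simp add: sum_set_Cons)

lemma act_Nil: "act \<alpha> K [] = \<alpha> []"
  by (simp add: act_def charB_def)

lemma charB_add: "charB K (M + N) = charB K M * charB K N"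
  by (simp add: charB_def)

lemma act_Cons:
  "act \<alpha> K (P#w) = (\<Sum>Q\<in>coarsenings P. charB K (quot P Q) * act (\<lambda>v. \<alpha> (Q#v)) K w)"
  unfolding act_def by (simp add: sum_set_Cons charB_add sum_distrib_left mult_ac)

lemma act_append:
  "act \<alpha> K (u @ v) = act (\<lambda>x. act (\<lambda>y. \<alpha> (x @ y)) K v) K u"
  by (induction u arbitrary: \<alpha>) (simp_all add: act_Nil act_Cons)

lemma act_cong:
  "(\<And>Qs. Qs \<in> listset (map coarsenings w) \<Longrightarrow> \<alpha>1 Qs = \<alpha>2 Qs) \<Longrightarrow> act \<alpha>1 K w = act \<alpha>2 K w"
  unfolding act_def by (intro sum.cong) auto

lemma act_add: "act (\<lambda>v. a v + b v) K w = act a K w + act b K w"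
  unfolding act_def by (simp add: distrib_right sum.distrib)

lemma act_sum: "act (\<lambda>v. \<Sum>i\<in>I. a i v) K w = (\<Sum>i\<in>I. act (a i) K w)"
  unfolding act_def by (simp add: sum_distrib_right sum.swap[of _ I])

lemma act_scale: "act (\<lambda>v. c * a v) K w = c * act a K w"
  unfolding act_def by (simp add: sum_distrib_left mult_ac)

lemma act_divide: "act (\<lambda>v. a v / c) K w = act a K w / (c::'a::field)"
  unfolding act_def by (simp add: sum_divide_distrib)

lemma conv_cong:
  "(\<And>Ls. Ls \<in> listset (map cuts w) \<Longrightarrow> f1 (concat (map2 lword w Ls)) = f2 (concat (map2 lword w Ls)))
   \<Longrightarrow> (\<And>Ls. Ls \<in> listset (map cuts w) \<Longrightarrow> g1 (concat (map2 uword w Ls)) = g2 (concat (map2 uword w Ls)))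
   \<Longrightarrow> conv f1 g1 w = conv f2 g2 w"
  unfolding conv_def by (intro sum.cong) auto

lemma conv_add_left: "conv (\<lambda>v. a v + b v) g w = conv a g w + conv b g w"
  unfolding conv_def by (simp add: distrib_right sum.distrib)

lemma conv_scale_left: "conv (\<lambda>v. c * a v) g w = c * conv a g w"
  unfolding conv_def by (simp add: sum_distrib_left mult_ac)

lemma conv_sum_right: "conv f (\<lambda>v. \<Sum>i\<in>I. a i v) w = (\<Sum>i\<in>I. conv f (a i) w)"
  unfolding conv_def by (simp add: sum_distrib_left sum.swap[of _ I])

lemma conv_scale_right: "conv f (\<lambda>v. c * a v) w = c * conv f a w"
  unfolding conv_def by (simp add: sum_distrib_left mult_ac)

lemma conv_zero_left: "conv (\<lambda>v. 0) g w = 0"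
  unfolding conv_def by simp




lemma cuts_empty: "{} \<in> cuts P"
  by (simp add: cuts_def lowerset_def)

lemma cuts_subset: "L \<in> cuts P \<Longrightarrow> L \<subseteq> P"
  by (simp add: cuts_def lowerset_def)

lemma finite_cuts: "finite P \<Longrightarrow> finite (cuts P)"
  by (rule finite_subset[of _ "Pow P"]) (auto simp: cuts_def lowerset_def)

lemma lword_empty[simp]: "lword P {} = []"
  by (simp add: lword_def)

lemma lword_nonempty: "L \<noteq> {} \<Longrightarrow> lword P L = [induced P (\<Union>L)]"
  by (simp add: lword_def)

lemma lword_Nil_iff: "lword P L = [] \<longleftrightarrow> L = {}"
  by (simp add: lword_def)

lemma uword_empty:
  assumes "nonempty_ncp P" shows "uword P {} = [P]"
proof -
  obtain n where n: "n \<ge> 1" "ncp n P" using assms by (rule nonempty_ncpE)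
  have g: "gap P {} 0 = \<Union>P" by (auto simp: gap_def Let_def)
  have ne: "\<Union>P \<noteq> {}" using ncp_union[OF n(2)] n(1) by auto
  show ?thesis unfolding uword_def using g ne induced_self[OF n(2)] by simp
qed

lemma valid_word_simps[simp]:
  "valid_word []" "valid_word (P#w) \<longleftrightarrow> nonempty_ncp P \<and> valid_word w"
  "valid_word (u @ v) \<longleftrightarrow> valid_word u \<and> valid_word v"
  by (auto simp: valid_word_def)

lemma valid_concat: "(\<And>x. x \<in> set xs \<Longrightarrow> valid_word x) \<Longrightarrow> valid_word (concat xs)"
  by (induction xs) auto

lemma nonempty_ncp_blocks: "nonempty_ncp P \<Longrightarrow> {} \<notin> P"
  by (metis ncpD(1) nonempty_ncpE partition_onD3)

lemma valid_lword:
  assumes "nonempty_ncp P" "L \<in> cuts P" shows "valid_word (lword P L)"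
proof (cases "L = {}")
  case True then show ?thesis by simp
next
  case False
  have "\<Union>L \<subseteq> \<Union>P" using cuts_subset[OF assms(2)] by blast
  moreover have "\<Union>L \<noteq> {}"
  proof -
    obtain B where B: "B \<in> L" using False by blast
    then have "B \<noteq> {}" using cuts_subset[OF assms(2)] nonempty_ncp_blocks[OF assms(1)] by blast
    then show ?thesis using B by blast
  qed
  ultimately show ?thesis using False nonempty_ncp_induced[OF assms(1)] by (simp add: lword_nonempty)
qed

lemma valid_uword:
  assumes "nonempty_ncp P" shows "valid_word (uword P L)"
proof -
  have g: "gap P L i \<subseteq> \<Union>P" for i by (auto simp: gap_def Let_def)
  have "nonempty_ncp Q" if "Q \<in> set (uword P L)" for Q
  proof -
    have "\<exists>i. Q = induced P (gap P L i) \<and> gap P L i \<noteq> {}" using that by (auto simp: uword_def)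
    then obtain i where "Q = induced P (gap P L i)" "gap P L i \<noteq> {}" by blast
    then show ?thesis using nonempty_ncp_induced[OF assms g] by simp
  qed
  then show ?thesis unfolding valid_word_def list_all_iff by blast
qed

lemma valid_lwords:
  "valid_word w \<Longrightarrow> Ls \<in> listset (map cuts w) \<Longrightarrow> valid_word (concat (map2 lword w Ls))"
  by (induction w arbitrary: Ls) (auto simp: set_Cons_def valid_lword)

lemma valid_uwords:
  "valid_word w \<Longrightarrow> Ls \<in> listset (map cuts w) \<Longrightarrow> valid_word (concat (map2 uword w Ls))"
  by (induction w arbitrary: Ls) (auto simp: set_Cons_def valid_uword)

lemma coarsening_ncp:
  assumes "nonempty_ncp P" "Q \<in> coarsenings P" shows "nonempty_ncp Q"
proof -
  obtain n where n: "n \<ge> 1" "ncp n P" using assms(1) by (rule nonempty_ncpE)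
  have "ncp n Q" using assms(2) ncp_union[OF n(2)] unfolding coarsenings_def ncp_def by auto
  then show ?thesis using n(1) unfolding nonempty_ncp_def by blast
qed

lemma finite_coarsenings:
  assumes "nonempty_ncp P" shows "finite (coarsenings P)"
proof -
  have "finite {Q. partition_on (\<Union>P) Q}"
    using nonempty_ncp_union_finite[OF assms] by (rule finitely_many_partition_on)
  then show ?thesis unfolding coarsenings_def by (rule finite_subset[rotated]) auto
qed

lemma valid_coarsenings:
  "valid_word w \<Longrightarrow> Qs \<in> listset (map coarsenings w) \<Longrightarrow> valid_word Qs"
  by (induction w arbitrary: Qs) (auto simp: set_Cons_def coarsening_ncp)

section \<open>counit and the recursion\<close>

lemma counit_simps[simp]: "counit [] = 1" "counit (x#xs) = 0"
  by (simp_all add: counit_def)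

lemma sum_only_empty:
  assumes "finite S" "{} \<in> S" "\<And>L. L \<in> S \<Longrightarrow> L \<noteq> {} \<Longrightarrow> F L = 0"
  shows "sum F S = F {}"
proof -
  have "sum F S = F {} + sum F (S - {{}})" using assms(1,2) by (simp add: sum.remove)
  also have "sum F (S - {{}}) = 0" using assms(3) by (intro sum.neutral) auto
  finally show ?thesis by simp
qed

lemma conv_counit:
  "valid_word w \<Longrightarrow> conv counit h w = h w"
proof (induction w arbitrary: h)
  case Nil then show ?case by (simp add: conv_Nil)
next
  case (Cons P w)
  have P: "nonempty_ncp P" and w: "valid_word w" using Cons.prems by auto
  have "conv counit h (P#w) = (\<Sum>L\<in>cuts P. conv (\<lambda>v. counit (lword P L @ v)) (\<lambda>v. h (uword P L @ v)) w)"
    by (rule conv_Cons)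
  also have "\<dots> = conv (\<lambda>v. counit (lword P {} @ v)) (\<lambda>v. h (uword P {} @ v)) w"
  proof (rule sum_only_empty)
    show "finite (cuts P)" using finite_cuts nonempty_ncp_finite[OF P] by blast
    show "{} \<in> cuts P" by (rule cuts_empty)
    fix L :: ncpart assume "L \<in> cuts P" "L \<noteq> {}"
    then have z: "(\<lambda>v. counit (lword P L @ v)) = (\<lambda>v. 0)" by (simp add: lword_nonempty)
    then show "conv (\<lambda>v. counit (lword P L @ v)) (\<lambda>v. h (uword P L @ v)) w = 0"
      by (subst z) (rule conv_zero_left)
  qed
  also have "\<dots> = h (P#w)" using Cons.IH[OF w] by (simp add: uword_empty[OF P])
  finally show ?case .
qed

lemma inf_split:
  assumes "is_inf_character f" "valid_word x" "valid_word v"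
  shows "f (x @ v) = f x * counit v + counit x * f v"
proof (cases "x = [] \<or> v = []")
  case True then show ?thesis using assms(1) unfolding is_inf_character_def by auto
next
  case False
  have "\<forall>u v. valid_word u \<and> valid_word v \<and> u \<noteq> [] \<and> v \<noteq> [] \<longrightarrow> f (u @ v) = 0"
    using assms(1) unfolding is_inf_character_def by blast
  then have "f (x @ v) = 0" using assms(2,3) False by blast
  then show ?thesis using False by (simp add: counit_def)
qed

lemma conv_rec:
  assumes f: "is_inf_character f" and P: "nonempty_ncp P" and w: "valid_word w"
  shows "conv f g (P#w) = (\<Sum>L\<in>cuts P. f (lword P L) * g (uword P L @ w)) + conv f (\<lambda>v. g (P#v)) w"
proof -
  have fin: "finite (cuts P)" using finite_cuts nonempty_ncp_finite[OF P] by blast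
  have step: "conv (\<lambda>v. f (lword P L @ v)) (\<lambda>v. g (uword P L @ v)) w
      = f (lword P L) * g (uword P L @ w) + counit (lword P L) * conv f (\<lambda>v. g (uword P L @ v)) w"
    if hL: "L \<in> cuts P" for L :: ncpart
  proof -
    have "conv (\<lambda>v. f (lword P L @ v)) (\<lambda>v. g (uword P L @ v)) w
       = conv (\<lambda>v. f (lword P L) * counit v + counit (lword P L) * f v) (\<lambda>v. g (uword P L @ v)) w"
      by (rule conv_cong) (auto intro!: inf_split[OF f] valid_lword[OF P hL] valid_lwords[OF w])
    also have "\<dots> = f (lword P L) * conv counit (\<lambda>v. g (uword P L @ v)) w
        + counit (lword P L) * conv f (\<lambda>v. g (uword P L @ v)) w"
      by (simp add: conv_add_left conv_scale_left)
    also have "conv counit (\<lambda>v. g (uword P L @ v)) w = g (uword P L @ w)"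
      by (rule conv_counit[OF w])
    finally show ?thesis .
  qed
  have "conv f g (P#w) = (\<Sum>L\<in>cuts P. f (lword P L) * g (uword P L @ w) + counit (lword P L) * conv f (\<lambda>v. g (uword P L @ v)) w)"
    unfolding conv_Cons using step by (intro sum.cong) auto
  also have "\<dots> = (\<Sum>L\<in>cuts P. f (lword P L) * g (uword P L @ w)) + (\<Sum>L\<in>cuts P. counit (lword P L) * conv f (\<lambda>v. g (uword P L @ v)) w)"
    by (simp add: sum.distrib)
  also have "(\<Sum>L\<in>cuts P. counit (lword P L) * conv f (\<lambda>v. g (uword P L @ v)) w) = conv f (\<lambda>v. g (P#v)) w"
    by (subst sum_only_empty[OF fin cuts_empty]) (auto simp: lword_nonempty uword_empty[OF P])
  finally show ?thesis .
qed




section \<open>gap characterisation\<close>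

definition gidx :: "nat set \<Rightarrow> nat \<Rightarrow> nat" where
  "gidx U y = card {x\<in>U. x < y}"

definition G :: "ncpart \<Rightarrow> nat set \<Rightarrow> nat \<Rightarrow> nat set" where
  "G P U c = {y\<in>\<Union>P. y \<notin> U \<and> gidx U y = c}"

definition gcs :: "ncpart \<Rightarrow> nat set \<Rightarrow> nat list" where
  "gcs P U = filter (\<lambda>c. G P U c \<noteq> {}) [0..<card U + 1]"

lemma gidx_le: "finite U \<Longrightarrow> gidx U y \<le> card U"
  unfolding gidx_def by (intro card_mono) auto

lemma sorted_idx:
  assumes U: "finite U" and y: "y \<notin> U" and j: "j < card U"
  shows "sorted_list_of_set U ! j < y \<longleftrightarrow> j < gidx U y"
proof -
  define xs where "xs = sorted_list_of_set U"
  have s: "sorted_wrt (<) xs" unfolding xs_def by simp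
  have d: "distinct xs" unfolding xs_def by simp
  have len: "length xs = card U" unfolding xs_def by simp
  have st: "set xs = U" unfolding xs_def using U by simp
  have fin: "finite {x\<in>U. x < y}" using U by simp
  have mono: "xs ! l \<le> xs ! j" if "l \<le> j" "j < length xs" for l j
    using s that by (metis order_less_imp_le order_refl le_neq_implies_less sorted_wrt_nth_less)
  show ?thesis unfolding xs_def[symmetric]
  proof
    assume a: "xs ! j < y"
    have "set (take (Suc j) xs) \<subseteq> {x\<in>U. x < y}"
    proof
      fix x assume "x \<in> set (take (Suc j) xs)"
      then obtain l where l: "l < length (take (Suc j) xs)" "x = take (Suc j) xs ! l"
        by (auto simp: in_set_conv_nth)
      then have "l \<le> j" "l < length xs" "x = xs ! l" by auto
      then have "x \<le> xs ! j" "x \<in> U" using mono j len st by auto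
      then show "x \<in> {x\<in>U. x < y}" using a by auto
    qed
    then have "card (set (take (Suc j) xs)) \<le> gidx U y"
      unfolding gidx_def using fin by (rule card_mono[rotated])
    moreover have "card (set (take (Suc j) xs)) = Suc j"
      using d j len by (simp add: distinct_card)
    ultimately show "j < gidx U y" by simp
  next
    assume a: "j < gidx U y"
    show "xs ! j < y"
    proof (rule ccontr)
      assume "\<not> xs ! j < y"
      moreover have "xs ! j \<in> U" using st j len by auto
      ultimately have gt: "y < xs ! j" using y by (metis linorder_neqE_nat)
      have "{x\<in>U. x < y} \<subseteq> set (take j xs)"
      proof
        fix x assume x: "x \<in> {x\<in>U. x < y}"
        then obtain l where l: "l < length xs" "x = xs ! l" using st by (auto simp: in_set_conv_nth)
        have "l < j"
        proof (rule ccontr)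
          assume "\<not> l < j"
          then have "xs ! j \<le> xs ! l" using mono l(1) by auto
          then show False using x l gt by auto
        qed
        then show "x \<in> set (take j xs)" using l by (auto simp: in_set_conv_nth)
      qed
      then have "gidx U y \<le> card (set (take j xs))" unfolding gidx_def by (rule card_mono[rotated]) simp
      also have "\<dots> \<le> j" by (metis card_length length_take min.bounded_iff)
      finally show False using a by simp
    qed
  qed
qed

lemma gap_eq:
  assumes fin: "finite (\<Union>L)" and i: "i \<le> card (\<Union>L)"
  shows "gap P L i = G P (\<Union>L) i"
proof -
  define U where "U = \<Union>L"
  define xs where "xs = sorted_list_of_set U"
  have len: "length xs = card U" unfolding xs_def by simp
  have st: "set xs = U" unfolding xs_def U_def using fin by simp
  have cond: "((i = 0 \<or> xs ! (i - 1) < y) \<and> (i = card U \<or> y < xs ! i)) \<longleftrightarrow> gidx U y = i"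
    if y: "y \<notin> U" for y
  proof -
    have c: "gidx U y \<le> card U" using gidx_le fin U_def by simp
    have A: "(i = 0 \<or> xs ! (i - 1) < y) \<longleftrightarrow> i \<le> gidx U y"
    proof (cases "i = 0")
      case False
      then have "i - 1 < card U" using i U_def by simp
      then have "xs ! (i - 1) < y \<longleftrightarrow> i - 1 < gidx U y"
        unfolding xs_def using sorted_idx fin y U_def by simp
      then show ?thesis using False by auto
    qed simp
    have B: "(i = card U \<or> y < xs ! i) \<longleftrightarrow> gidx U y \<le> i"
    proof (cases "i = card U")
      case True then show ?thesis using c by simp
    next
      case False
      then have ik: "i < card U" using i U_def by simp
      then have "xs ! i \<in> U" using st len by auto
      then have "y \<noteq> xs ! i" using y by auto
      then have "y < xs ! i \<longleftrightarrow> \<not> xs ! i < y" by auto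
      also have "\<dots> \<longleftrightarrow> \<not> i < gidx U y"
        unfolding xs_def using sorted_idx fin y U_def ik by simp
      finally show ?thesis using False by auto
    qed
    show ?thesis using A B by auto
  qed
  have "gap P L i = {y\<in>\<Union>P. y \<notin> U \<and> ((i = 0 \<or> xs ! (i - 1) < y) \<and> (i = card U \<or> y < xs ! i))}"
    unfolding gap_def Let_def U_def xs_def by simp
  also have "\<dots> = G P U i" unfolding G_def
  proof (rule Collect_cong)
    fix y show "(y \<in> \<Union>P \<and> y \<notin> U \<and> ((i = 0 \<or> xs ! (i - 1) < y) \<and> (i = card U \<or> y < xs ! i)))
      = (y \<in> \<Union>P \<and> y \<notin> U \<and> gidx U y = i)"
      using cond[of y] by auto
  qed
  finally show ?thesis unfolding U_def .
qed

lemma list_compr_filter: "[f x. x \<leftarrow> xs, p x] = map f (filter p xs)"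
  by (induction xs) auto

lemma uword_eq:
  assumes "finite (\<Union>L)"
  shows "uword P L = map (\<lambda>c. induced P (G P (\<Union>L) c)) (gcs P (\<Union>L))"
proof -
  have "uword P L = map (\<lambda>i. induced P (gap P L i)) (filter (\<lambda>i. gap P L i \<noteq> {}) [0..<card (\<Union>L) + 1])"
    unfolding uword_def list_compr_filter ..
  also have "filter (\<lambda>i. gap P L i \<noteq> {}) [0..<card (\<Union>L) + 1] = gcs P (\<Union>L)"
    unfolding gcs_def using gap_eq[OF assms] by (intro filter_cong) auto
  also have "map (\<lambda>i. induced P (gap P L i)) (gcs P (\<Union>L)) = map (\<lambda>c. induced P (G P (\<Union>L) c)) (gcs P (\<Union>L))"
  proof (rule map_cong[OF refl])
    fix x assume "x \<in> set (gcs P (\<Union>L))"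
    then have "x \<le> card (\<Union>L)" by (simp add: gcs_def del: upt_Suc)
    then show "induced P (gap P L x) = induced P (G P (\<Union>L) x)" using gap_eq[OF assms] by simp
  qed
  finally show ?thesis .
qed

lemma G_disjoint: "c \<noteq> d \<Longrightarrow> G P U c \<inter> G P U d = {}"
  by (auto simp: G_def)

lemma G_sub: "G P U c \<subseteq> \<Union>P - U"
  by (auto simp: G_def)

lemma distinct_gcs: "distinct (gcs P U)"
  by (simp add: gcs_def)

section \<open>size\<close>

definition wsize :: "ncpart list \<Rightarrow> nat" where
  "wsize w = sum_list (map (\<lambda>P. card (\<Union>P)) w)"

lemma wsize_simps[simp]: "wsize [] = 0" "wsize (P#w) = card (\<Union>P) + wsize w"
  "wsize (u @ v) = wsize u + wsize v"
  by (simp_all add: wsize_def)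

lemma card_union_induced:
  assumes "nonempty_ncp P" "D \<subseteq> \<Union>P"
  shows "card (\<Union>(induced P D)) = card D"
proof -
  obtain n where n: "n \<ge> 1" "ncp n P" using assms(1) by (rule nonempty_ncpE)
  have f: "finite D" using assms(2) ncp_union[OF n(2)] by (metis finite_subset finite_atLeastAtMost)
  have "ncp (card D) (induced P D)"
    using ncp_induced[OF ncpD(1)[OF n(2)] ncpD(2)[OF n(2)]] assms(2) ncp_union[OF n(2)] f by auto
  then show ?thesis using ncp_union by fastforce
qed

lemma wsize_uword_less:
  assumes P: "nonempty_ncp P" and L: "L \<in> cuts P" "L \<noteq> {}"
  shows "wsize (uword P L) < card (\<Union>P)"
proof -
  define U where "U = \<Union>L"
  have UP: "U \<subseteq> \<Union>P" using cuts_subset[OF L(1)] U_def by blast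
  have finP: "finite (\<Union>P)" using nonempty_ncp_union_finite[OF P] .
  have fU: "finite U" using UP finP finite_subset by blast
  have Une: "U \<noteq> {}"
  proof -
    obtain B where B: "B \<in> L" using L(2) by blast
    then have "B \<noteq> {}" using cuts_subset[OF L(1)] nonempty_ncp_blocks[OF P] by blast
    then show ?thesis using B U_def by blast
  qed
  have "wsize (uword P L) = sum_list (map (\<lambda>c. card (\<Union>(induced P (G P U c)))) (gcs P U))"
    unfolding uword_eq[OF fU[unfolded U_def]] U_def wsize_def by (simp add: comp_def)
  also have "\<dots> = sum_list (map (\<lambda>c. card (G P U c)) (gcs P U))"
    using card_union_induced[OF P] G_sub by (intro arg_cong[where f=sum_list] map_cong) blast+
  also have "\<dots> = (\<Sum>c\<in>set (gcs P U). card (G P U c))"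
    by (rule sum_list_distinct_conv_sum_set[OF distinct_gcs])
  also have "\<dots> = card (\<Union>c\<in>set (gcs P U). G P U c)"
  proof (rule card_UN_disjoint[symmetric])
    show "finite (set (gcs P U))" by simp
    show "\<forall>c\<in>set (gcs P U). finite (G P U c)" using finite_subset[OF G_sub] finP by blast
    show "\<forall>i\<in>set (gcs P U). \<forall>j\<in>set (gcs P U). i \<noteq> j \<longrightarrow> G P U i \<inter> G P U j = {}"
      using G_disjoint by blast
  qed
  also have "\<dots> \<le> card (\<Union>P - U)"
    using G_sub[of P U] finP by (intro card_mono) auto
  also have "\<dots> < card (\<Union>P)"
  proof (rule psubset_card_mono[OF finP])
    obtain u where "u \<in> U" using Une by blast
    then show "\<Union>P - U \<subset> \<Union>P" using UP by blast
  qed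
  finally show ?thesis .
qed

lemma wsize_coarsenings:
  "Qs \<in> listset (map coarsenings w) \<Longrightarrow> wsize Qs = wsize w"
  by (induction w arbitrary: Qs) (auto simp: set_Cons_def coarsenings_def partition_on_def)

lemma conv_vanish:
  assumes f: "is_inf_character f"
  shows "valid_word w \<Longrightarrow> (\<And>v. valid_word v \<Longrightarrow> wsize v < wsize w \<Longrightarrow> g v = 0) \<Longrightarrow> conv f g w = 0"
proof (induction w arbitrary: g)
  case Nil then show ?case using f by (simp add: conv_Nil is_inf_character_def)
next
  case (Cons P w)
  have P: "nonempty_ncp P" and w: "valid_word w" using Cons.prems by auto
  have 1: "(\<Sum>L\<in>cuts P. f (lword P L) * g (uword P L @ w)) = 0"
  proof (intro sum.neutral ballI)
    fix L assume L: "L \<in> cuts P"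
    show "f (lword P L) * g (uword P L @ w) = 0"
    proof (cases "L = {}")
      case True then show ?thesis using f by (simp add: is_inf_character_def)
    next
      case False
      have "g (uword P L @ w) = 0"
        using Cons.prems(2)[of "uword P L @ w"] valid_uword[OF P] w wsize_uword_less[OF P L False] by simp
      then show ?thesis by simp
    qed
  qed
  have 2: "conv f (\<lambda>v. g (P#v)) w = 0"
    using Cons.IH[OF w] Cons.prems(2) P by simp
  show ?case using conv_rec[OF f P w, of g] 1 2 by simp
qed

lemma conv_pow_vanish:
  assumes f: "is_inf_character f"
  shows "valid_word w \<Longrightarrow> wsize w < m \<Longrightarrow> conv_pow f m w = 0"
proof (induction m arbitrary: w)
  case 0 then show ?case by simp
next
  case (Suc m)
  show ?case using Suc by (simp add: conv_vanish[OF f])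
qed

lemma exp_conv_fin:
  assumes f: "is_inf_character f" and w: "valid_word w" and N: "wsize w \<le> N"
  shows "exp_conv f w = (\<Sum>m\<le>N. conv_pow f m w / fact m)"
  unfolding exp_conv_def
proof (rule sum.mono_neutral_left)
  show "finite {..N}" by simp
  show "{m. conv_pow f m w \<noteq> 0} \<subseteq> {..N}"
  proof
    fix m assume "m \<in> {m. conv_pow f m w \<noteq> 0}"
    then have "\<not> wsize w < m" using conv_pow_vanish[OF f w] by auto
    then show "m \<in> {..N}" using N by simp
  qed
  show "\<forall>i\<in>{..N} - {m. conv_pow f m w \<noteq> 0}. conv_pow f i w / fact i = 0" by simp
qed




definition unstd :: "nat set \<Rightarrow> ncpart \<Rightarrow> ncpart" where
  "unstd D R = (\<lambda>b. inv_into D (rank D) ` b) ` R"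

lemma rank_inv:
  assumes "finite D" "a \<in> {1..card D}"
  shows "inv_into D (rank D) a \<in> D" "rank D (inv_into D (rank D) a) = a"
proof -
  have a: "a \<in> rank D ` D" using assms rank_image by simp
  show "inv_into D (rank D) a \<in> D" using a by (rule inv_into_into)
  show "rank D (inv_into D (rank D) a) = a" using a by (rule f_inv_into_f)
qed

lemma inv_rank: "finite D \<Longrightarrow> x \<in> D \<Longrightarrow> inv_into D (rank D) (rank D x) = x"
  by (rule inv_into_f_f[OF inj_rank])

lemma inv_rank_mono:
  assumes "finite D" "a \<in> {1..card D}" "b \<in> {1..card D}" "a < b"
  shows "inv_into D (rank D) a < inv_into D (rank D) b"
  using rank_less_iff[OF assms(1) rank_inv(1)[OF assms(1,2)] rank_inv(1)[OF assms(1,3)]]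
    rank_inv(2)[OF assms(1,2)] rank_inv(2)[OF assms(1,3)] assms(4) by simp

lemma inj_inv_rank: "finite D \<Longrightarrow> inj_on (inv_into D (rank D)) {1..card D}"
  by (rule inj_on_inv_into) (simp add: rank_image)

lemma inv_rank_image: "finite D \<Longrightarrow> inv_into D (rank D) ` {1..card D} = D"
proof -
  assume f: "finite D"
  have "bij_betw (inv_into D (rank D)) {1..card D} D"
    using bij_betw_inv_into[OF bij_rank[OF f]] .
  then show ?thesis by (simp add: bij_betw_def)
qed

lemma unstd_props:
  assumes f: "finite D" and R: "partition_on {1..card D} R" and nc: "noncrossing R"
  shows "partition_on D (unstd D R)" "noncrossing (unstd D R)" "std D (unstd D R) = R"
proof -
  let ?u = "inv_into D (rank D)"
  have "partition_on (?u ` {1..card D}) ((`) ?u ` R - {{}})"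
    by (rule partition_on_inj_image[OF R inj_inv_rank[OF f]])
  moreover have "(`) ?u ` R - {{}} = unstd D R"
    using R unfolding unstd_def partition_on_def by auto
  ultimately show "partition_on D (unstd D R)" using inv_rank_image[OF f] by simp
  have U: "\<Union>R = {1..card D}" using R by (simp add: partition_on_def)
  show "noncrossing (unstd D R)" unfolding unstd_def
    using nc U inv_rank_mono[OF f] by (intro noncrossing_image) auto
  have "rank D ` (?u ` b) = b" if "b \<in> R" for b
  proof -
    have "b \<subseteq> {1..card D}" using that U by blast
    then have "rank D ` (?u ` b) = id ` b" unfolding image_image using rank_inv(2)[OF f]
      by (intro image_cong) auto
    then show ?thesis by simp
  qed
  then show "std D (unstd D R) = R" unfolding std_def unstd_def image_image by simp
qed

lemma unstd_std:
  assumes f: "finite D" and sub: "\<Union>R \<subseteq> D"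
  shows "unstd D (std D R) = R"
proof -
  have "inv_into D (rank D) ` (rank D ` b) = b" if "b \<in> R" for b
  proof -
    have "b \<subseteq> D" using that sub by blast
    then have "inv_into D (rank D) ` (rank D ` b) = id ` b" unfolding image_image using inv_rank[OF f]
      by (intro image_cong) auto
    then show ?thesis by simp
  qed
  then show ?thesis unfolding std_def unstd_def image_image by simp
qed

section \<open>induced and refinement\<close>

lemma refines_induced:
  assumes "refines P Q"
  shows "refines (induced P X) (induced Q X)"
  unfolding refines_def
proof
  fix B assume "B \<in> induced P X"
  then obtain \<pi> where \<pi>: "\<pi> \<in> P" "\<pi> \<inter> X \<noteq> {}" "B = rank X ` (\<pi> \<inter> X)"
    unfolding induced_def std_def restr_def by auto
  obtain C where C: "C \<in> Q" "\<pi> \<subseteq> C" using assms \<pi>(1) unfolding refines_def by blast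
  have "C \<inter> X \<noteq> {}" using \<pi>(2) C(2) by blast
  then have "rank X ` (C \<inter> X) \<in> induced Q X" using C(1) unfolding induced_def std_def restr_def by auto
  moreover have "B \<subseteq> rank X ` (C \<inter> X)" using \<pi>(3) C(2) by blast
  ultimately show "\<exists>C\<in>induced Q X. B \<subseteq> C" by blast
qed

lemma induced_coarsening:
  assumes "partition_on A P" "noncrossing P" "partition_on A Q" "noncrossing Q" "refines P Q"
    "X \<subseteq> A" "finite X"
  shows "induced Q X \<in> coarsenings (induced P X)"
proof -
  have 1: "ncp (card X) (induced P X)" using ncp_induced assms by blast
  have 2: "ncp (card X) (induced Q X)" using ncp_induced assms by blast
  show ?thesis unfolding coarsenings_def
    using ncp_union[OF 1] ncpD[OF 2] refines_induced[OF assms(5)] by simp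
qed

lemma rank_rank:
  assumes f: "finite D" and t: "\<tau> \<subseteq> D" and x: "x \<in> \<tau>"
  shows "rank (rank D ` \<tau>) (rank D x) = rank \<tau> x"
proof -
  have ft: "finite \<tau>" using f t finite_subset by blast
  have "{y \<in> rank D ` \<tau>. y \<le> rank D x} = rank D ` {z\<in>\<tau>. z \<le> x}"
    using rank_le_iff[OF f] t x by auto
  moreover have "inj_on (rank D) {z\<in>\<tau>. z \<le> x}"
    by (rule inj_on_subset[OF inj_rank[OF f]]) (use t in blast)
  ultimately show ?thesis unfolding rank_def by (simp add: card_image)
qed

lemma induced_induced:
  assumes f: "finite D" and t: "\<tau> \<subseteq> D"
  shows "induced (induced P D) (rank D ` \<tau>) = induced P \<tau>"
proof -
  let ?r = "rank D"
  have inj: "inj_on ?r D" using inj_rank[OF f] .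
  have 1: "restr (induced P D) (?r ` \<tau>) = (`) ?r ` restr P \<tau>"
  proof -
    have "?r ` (\<pi> \<inter> D) \<inter> ?r ` \<tau> = ?r ` (\<pi> \<inter> \<tau>)" for \<pi>
    proof -
      have "?r ` (\<pi> \<inter> D) \<inter> ?r ` \<tau> = ?r ` ((\<pi> \<inter> D) \<inter> \<tau>)"
        using inj t by (intro inj_on_image_Int[symmetric]) auto
      also have "(\<pi> \<inter> D) \<inter> \<tau> = \<pi> \<inter> \<tau>" using t by blast
      finally show ?thesis .
    qed
    note eq = this
    show ?thesis
    proof (intro set_eqI iffI)
      fix X assume "X \<in> restr (induced P D) (?r ` \<tau>)"
      then obtain S where S: "S \<in> induced P D" "X = S \<inter> ?r ` \<tau>" "X \<noteq> {}"
        unfolding restr_def by blast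
      then obtain \<pi> where \<pi>: "\<pi> \<in> P" "S = ?r ` (\<pi> \<inter> D)"
        unfolding induced_def std_def restr_def by blast
      have X: "X = ?r ` (\<pi> \<inter> \<tau>)" using S(2) \<pi>(2) eq by simp
      then have "\<pi> \<inter> \<tau> \<noteq> {}" using S(3) by auto
      then have "\<pi> \<inter> \<tau> \<in> restr P \<tau>" using \<pi>(1) unfolding restr_def by blast
      then show "X \<in> (`) ?r ` restr P \<tau>" using X by blast
    next
      fix X assume "X \<in> (`) ?r ` restr P \<tau>"
      then obtain \<pi> where \<pi>: "\<pi> \<in> P" "\<pi> \<inter> \<tau> \<noteq> {}" "X = ?r ` (\<pi> \<inter> \<tau>)"
        unfolding restr_def by blast
      have "\<pi> \<inter> D \<noteq> {}" using \<pi>(2) t by blast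
      then have "\<pi> \<inter> D \<in> restr P D" using \<pi>(1) unfolding restr_def by blast
      then have S: "?r ` (\<pi> \<inter> D) \<in> induced P D" unfolding induced_def std_def by blast
      have "?r ` (\<pi> \<inter> D) \<inter> ?r ` \<tau> = X" using eq \<pi>(3) by simp
      moreover have "X \<noteq> {}" using \<pi>(2,3) by simp
      ultimately show "X \<in> restr (induced P D) (?r ` \<tau>)" using S unfolding restr_def by blast
    qed
  qed
  have 2: "(\<lambda>x. rank (?r ` \<tau>) (?r x)) ` B = rank \<tau> ` B" if "B \<in> restr P \<tau>" for B
  proof -
    have "B \<subseteq> \<tau>" using that unfolding restr_def by auto
    then show ?thesis using rank_rank[OF f t] by (intro image_cong) auto
  qed
  have "induced (induced P D) (?r ` \<tau>) = (\<lambda>B. rank (?r ` \<tau>) ` B) ` ((`) ?r ` restr P \<tau>)"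
    unfolding induced_def[of "induced P D"] std_def 1 ..
  also have "\<dots> = (\<lambda>B. rank \<tau> ` B) ` restr P \<tau>"
    unfolding image_image by (rule image_cong[OF refl 2])
  also have "\<dots> = induced P \<tau>" unfolding induced_def std_def ..
  finally show ?thesis .
qed

section \<open>convex hulls and gaps\<close>

lemma Conv_sub: "finite \<tau> \<Longrightarrow> \<tau> \<subseteq> Conv \<tau>"
  unfolding Conv_def by auto

lemma gidx_mono: "y \<le> y' \<Longrightarrow> gidx U y \<le> gidx U y'" if "finite U"
  unfolding gidx_def using that by (intro card_mono) auto

lemma gidx_const:
  assumes "finite \<tau>" "\<tau> \<noteq> {}" "Conv \<tau> \<inter> U = {}" "y \<in> \<tau>"
  shows "gidx U y = gidx U (Min \<tau>)"
proof -
  have "{x\<in>U. x < y} = {x\<in>U. x < Min \<tau>}"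
  proof (intro set_eqI iffI)
    fix x assume x: "x \<in> {x\<in>U. x < y}"
    have "y \<le> Max \<tau>" using assms by simp
    show "x \<in> {x\<in>U. x < Min \<tau>}"
    proof (rule ccontr)
      assume "x \<notin> {x\<in>U. x < Min \<tau>}"
      then have "x \<in> Conv \<tau>" using x \<open>y \<le> Max \<tau>\<close> unfolding Conv_def by auto
      then show False using assms(3) x by blast
    qed
  next
    fix x assume "x \<in> {x\<in>U. x < Min \<tau>}"
    moreover have "Min \<tau> \<le> y" using assms by simp
    ultimately show "x \<in> {x\<in>U. x < y}" by auto
  qed
  then show ?thesis unfolding gidx_def by simp
qed

lemma in_G:
  assumes "finite \<tau>" "\<tau> \<noteq> {}" "Conv \<tau> \<inter> U = {}" "\<tau> \<subseteq> \<Union>P"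
  shows "\<tau> \<subseteq> G P U (gidx U (Min \<tau>))"
  using gidx_const[OF assms(1-3)] Conv_sub[OF assms(1)] assms(3,4) unfolding G_def by blast

lemma G_Conv:
  assumes U: "finite U" and t: "\<tau> \<subseteq> G P U c" "finite \<tau>" "\<tau> \<noteq> {}"
  shows "Conv \<tau> \<inter> U = {}"
proof (rule ccontr)
  assume "Conv \<tau> \<inter> U \<noteq> {}"
  then obtain x where x: "x \<in> U" "Min \<tau> \<le> x" "x \<le> Max \<tau>" unfolding Conv_def by auto
  have mi: "Min \<tau> \<in> \<tau>" and ma: "Max \<tau> \<in> \<tau>" using t by auto
  have "Min \<tau> \<notin> U" "Max \<tau> \<notin> U" "gidx U (Min \<tau>) = c" "gidx U (Max \<tau>) = c"
    using mi ma t(1) unfolding G_def by auto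
  then have "Min \<tau> < x" "x < Max \<tau>" using x by (metis le_neq_implies_less)+
  have sub: "{z\<in>U. z < Min \<tau>} \<subseteq> {z\<in>U. z < Max \<tau>}"
    using \<open>Min \<tau> < x\<close> \<open>x < Max \<tau>\<close> by auto
  have "x \<in> {z\<in>U. z < Max \<tau>}" "x \<notin> {z\<in>U. z < Min \<tau>}"
    using \<open>Min \<tau> < x\<close> \<open>x < Max \<tau>\<close> x(1) by auto
  then have "{z\<in>U. z < Min \<tau>} \<subset> {z\<in>U. z < Max \<tau>}" using sub by blast
  then have "gidx U (Min \<tau>) < gidx U (Max \<tau>)" unfolding gidx_def using U
    by (intro psubset_card_mono) auto
  then show False using \<open>gidx U (Min \<tau>) = c\<close> \<open>gidx U (Max \<tau>) = c\<close> by simp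
qed

section \<open>outer blocks\<close>

lemma outer_iff:
  assumes "\<sigma> \<in> Q"
  shows "{\<sigma>} \<in> cuts Q \<longleftrightarrow> (\<forall>\<tau>\<in>Q. \<tau> \<noteq> \<sigma> \<longrightarrow> Conv \<tau> \<inter> \<sigma> = {})"
proof
  assume c: "{\<sigma>} \<in> cuts Q"
  show "\<forall>\<tau>\<in>Q. \<tau> \<noteq> \<sigma> \<longrightarrow> Conv \<tau> \<inter> \<sigma> = {}"
  proof (intro ballI impI)
    fix \<tau> assume "\<tau> \<in> Q" "\<tau> \<noteq> \<sigma>"
    show "Conv \<tau> \<inter> \<sigma> = {}"
    proof (rule ccontr)
      assume "Conv \<tau> \<inter> \<sigma> \<noteq> {}"
      then have "arrow Q \<tau> \<sigma>" unfolding arrow_def using \<open>\<tau> \<in> Q\<close> assms by (intro tranclp.r_into_trancl) simp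
      moreover have "\<forall>\<pi>\<in>{\<sigma>}. \<forall>s. arrow Q s \<pi> \<longrightarrow> s \<in> {\<sigma>}"
        using c unfolding cuts_def lowerset_def by simp
      ultimately have "\<tau> \<in> {\<sigma>}" by blast
      then show False using \<open>\<tau> \<noteq> \<sigma>\<close> by simp
    qed
  qed
next
  assume h: "\<forall>\<tau>\<in>Q. \<tau> \<noteq> \<sigma> \<longrightarrow> Conv \<tau> \<inter> \<sigma> = {}"
  have "s = \<sigma>" if "arrow Q s \<sigma>" for s
    using that unfolding arrow_def
  proof (induction rule: converse_tranclp_induct)
    case (base y)
    then have "y \<in> Q" "Conv y \<inter> \<sigma> \<noteq> {}" by auto
    then show ?case using h by blast
  next
    case (step y z)
    then have "y \<in> Q" "Conv y \<inter> z \<noteq> {}" "z = \<sigma>" by auto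
    then show ?case using h by blast
  qed
  then show "{\<sigma>} \<in> cuts Q" unfolding cuts_def lowerset_def using assms by auto
qed

lemma lowerset_outside:
  assumes L: "L \<in> cuts P" and \<pi>: "\<pi> \<in> P" "\<pi> \<notin> L"
  shows "Conv \<pi> \<inter> \<Union>L = {}"
proof (rule ccontr)
  assume "Conv \<pi> \<inter> \<Union>L \<noteq> {}"
  then obtain \<rho> where \<rho>: "\<rho> \<in> L" "Conv \<pi> \<inter> \<rho> \<noteq> {}" by blast
  have "\<rho> \<in> P" using \<rho>(1) L by (auto simp: cuts_def lowerset_def)
  then have "arrow P \<pi> \<rho>" unfolding arrow_def using \<pi>(1) \<rho>(2) by (intro tranclp.r_into_trancl) simp
  moreover have "\<forall>\<pi>\<in>L. \<forall>s. arrow P s \<pi> \<longrightarrow> s \<in> L"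
    using L unfolding cuts_def lowerset_def by simp
  ultimately have "\<pi> \<in> L" using \<rho>(1) by blast
  then show False using \<pi>(2) by blast
qed




definition Qof :: "ncpart \<Rightarrow> nat set \<Rightarrow> ncpart list \<Rightarrow> ncpart" where
  "Qof P U B = insert U (\<Union>i<length B. unstd (G P U (gcs P U ! i)) (B ! i))"

definition Phi :: "ncpart \<Rightarrow> nat set \<Rightarrow> ncpart \<Rightarrow> ncpart list" where
  "Phi P U Q = map (\<lambda>c. induced Q (G P U c)) (gcs P U)"

lemma UN_nth: "(\<Union>i<length xs. f (xs ! i)) = (\<Union>x\<in>set xs. f x)"
proof -
  have s: "set xs = (!) xs ` {..<length xs}" by (auto simp: in_set_conv_nth)
  show ?thesis unfolding s image_image ..
qed

lemma in_gcs: "c \<in> set (gcs P U) \<longleftrightarrow> c \<le> card U \<and> G P U c \<noteq> {}"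
  by (auto simp: gcs_def simp del: upt_Suc)

lemma charB_quot: "charB K (quot P Q) = (\<Prod>\<tau>\<in>Q. K (induced P \<tau>))"
  by (simp add: charB_def quot_def prod_unfold_prod_mset multiset.map_comp comp_def)

lemma charB_map2:
  "charB K (sum_list (map2 quot (map f cs) (map g cs))) = prod_list (map (\<lambda>c. charB K (quot (f c) (g c))) cs)"
  by (induction cs) (simp_all add: charB_add, simp add: charB_def)

lemma nonempty_ncpE2:
  assumes "nonempty_ncp P"
  shows "partition_on (\<Union>P) P" "noncrossing P" "finite (\<Union>P)"
proof -
  obtain n where n: "n \<ge> 1" "ncp n P" using assms by (rule nonempty_ncpE)
  show "partition_on (\<Union>P) P" using ncpD(1)[OF n(2)] ncp_union[OF n(2)] by simp
  show "noncrossing P" using ncpD(2)[OF n(2)] .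
  show "finite (\<Union>P)" using nonempty_ncp_union_finite[OF assms] .
qed

context
  fixes P :: ncpart and L :: ncpart
  assumes P: "nonempty_ncp P" and L: "L \<in> cuts P" and Lne: "L \<noteq> {}"
begin

abbreviation "U \<equiv> \<Union>L"
abbreviation "cs \<equiv> gcs P U"

definition goodQ :: "ncpart \<Rightarrow> bool" where
  "goodQ Q \<longleftrightarrow> Q \<in> coarsenings P \<and> U \<in> Q \<and> {U} \<in> cuts Q"

lemma LP: "L \<subseteq> P" using cuts_subset[OF L] .

lemma partP: "partition_on (\<Union>P) P" and ncP: "noncrossing P" and finUP: "finite (\<Union>P)"
  using nonempty_ncpE2[OF P] by auto

lemma UP: "U \<subseteq> \<Union>P" using LP by blast

lemma finU: "finite U" using UP finUP finite_subset by blast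

lemma Une: "U \<noteq> {}"
proof -
  obtain B where B: "B \<in> L" using Lne by blast
  then have "B \<noteq> {}" using LP nonempty_ncp_blocks[OF P] by blast
  then show ?thesis using B by blast
qed

lemma finG: "finite (G P U c)"
  by (rule finite_subset[OF G_sub]) (simp add: finUP)

lemma GsubP: "G P U c \<subseteq> \<Union>P"
  using G_sub[of P U c] by blast

lemma GU: "G P U c \<inter> U = {}" by (auto simp: G_def)

lemma cover: "\<Union>P - U = (\<Union>c\<in>set cs. G P U c)"
proof (intro set_eqI iffI)
  fix y assume y: "y \<in> \<Union>P - U"
  let ?c = "gidx U y"
  have "y \<in> G P U ?c" using y by (auto simp: G_def)
  moreover have "?c \<le> card U" using gidx_le[OF finU] .
  ultimately have "?c \<in> set cs" unfolding in_gcs by blast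
  then show "y \<in> (\<Union>c\<in>set cs. G P U c)" using \<open>y \<in> G P U ?c\<close> by blast
next
  fix y assume "y \<in> (\<Union>c\<in>set cs. G P U c)"
  then show "y \<in> \<Union>P - U" using G_sub by blast
qed

lemma in_some_gap:
  assumes "\<tau> \<subseteq> \<Union>P" "finite \<tau>" "\<tau> \<noteq> {}" "Conv \<tau> \<inter> U = {}"
  shows "\<exists>c\<in>set cs. \<tau> \<subseteq> G P U c"
proof -
  let ?c = "gidx U (Min \<tau>)"
  have s: "\<tau> \<subseteq> G P U ?c" using in_G assms by blast
  then have "G P U ?c \<noteq> {}" using assms(3) by blast
  then have "?c \<in> set cs" using gidx_le[OF finU] unfolding in_gcs by blast
  then show ?thesis using s by blast
qed

lemma P_blocks: "\<pi> \<in> P \<Longrightarrow> \<pi> \<notin> L \<Longrightarrow> \<exists>c\<in>set cs. \<pi> \<subseteq> G P U c"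
  using lowerset_outside[OF L] partP nonempty_ncp_blocks[OF P] finUP
  by (intro in_some_gap) (auto intro: finite_subset)

lemma cs_distinct_G:
  "i < length cs \<Longrightarrow> j < length cs \<Longrightarrow> i \<noteq> j \<Longrightarrow> G P U (cs ! i) \<inter> G P U (cs ! j) = {}"
  using distinct_gcs[of P U] by (intro G_disjoint) (simp add: nth_eq_iff_index_eq)

lemma goodD:
  assumes "goodQ Q"
  shows "partition_on (\<Union>P) Q" "noncrossing Q" "refines P Q" "U \<in> Q" "{U} \<in> cuts Q" "finite Q"
proof -
  show pQ: "partition_on (\<Union>P) Q" "noncrossing Q" "refines P Q" "U \<in> Q" "{U} \<in> cuts Q"
    using assms unfolding goodQ_def coarsenings_def by auto
  show "finite Q" using finite_elements[OF finUP pQ(1)] .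
qed

lemma good_gap:
  assumes g: "goodQ Q" and \<tau>: "\<tau> \<in> Q" "\<tau> \<noteq> U"
  shows "\<exists>c\<in>set cs. \<tau> \<subseteq> G P U c"
proof -
  have pQ: "partition_on (\<Union>P) Q" using goodD[OF g] by blast
  have "\<tau> \<subseteq> \<Union>P" "\<tau> \<noteq> {}" using pQ \<tau>(1) unfolding partition_on_def by auto
  moreover have "finite \<tau>" using \<open>\<tau> \<subseteq> \<Union>P\<close> finUP finite_subset by blast
  moreover have "Conv \<tau> \<inter> U = {}" using outer_iff[of U Q] goodD[OF g] \<tau> by blast
  ultimately show ?thesis by (intro in_some_gap)
qed

lemma good_restr:
  assumes g: "goodQ Q"
  shows "restr Q (G P U c) = {\<tau>\<in>Q. \<tau> \<subseteq> G P U c}"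
proof (intro set_eqI iffI)
  have pQ: "partition_on (\<Union>P) Q" using goodD[OF g] by blast
  fix X assume "X \<in> restr Q (G P U c)"
  then obtain \<tau> where t: "\<tau> \<in> Q" "X = \<tau> \<inter> G P U c" "X \<noteq> {}" unfolding restr_def by blast
  have "\<tau> \<noteq> U" using t GU by blast
  then obtain c' where "\<tau> \<subseteq> G P U c'" using good_gap[OF g t(1)] by blast
  moreover have "c' = c" using t calculation G_disjoint by blast
  ultimately show "X \<in> {\<tau>\<in>Q. \<tau> \<subseteq> G P U c}" using t by (simp add: Int_absorb2)
next
  have pQ: "partition_on (\<Union>P) Q" using goodD[OF g] by blast
  fix X assume "X \<in> {\<tau>\<in>Q. \<tau> \<subseteq> G P U c}"
  moreover then have "X \<noteq> {}" using pQ unfolding partition_on_def by auto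
  ultimately show "X \<in> restr Q (G P U c)" unfolding restr_def by (auto simp: Int_absorb2)
qed

lemma good_rest: 
  assumes g: "goodQ Q"
  shows "(\<Union>c\<in>set cs. {\<tau>\<in>Q. \<tau> \<subseteq> G P U c}) = Q - {U}"
proof (intro set_eqI iffI)
  fix \<tau> assume "\<tau> \<in> (\<Union>c\<in>set cs. {\<tau>\<in>Q. \<tau> \<subseteq> G P U c})"
  then obtain c where "\<tau> \<in> Q" "\<tau> \<subseteq> G P U c" by blast
  then show "\<tau> \<in> Q - {U}" using GU Une by blast
next
  fix \<tau> assume "\<tau> \<in> Q - {U}"
  then show "\<tau> \<in> (\<Union>c\<in>set cs. {\<tau>\<in>Q. \<tau> \<subseteq> G P U c})" using good_gap[OF g] by blast
qed

lemma uwordL: "uword P L = map (\<lambda>c. induced P (G P U c)) cs"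
  using uword_eq[OF finU] .

lemma good_Phi:
  assumes g: "goodQ Q"
  shows "Phi P U Q \<in> listset (map coarsenings (uword P L))"
  unfolding in_listset_iff uwordL Phi_def
proof (intro conjI allI impI)
  fix i assume "i < length (map coarsenings (map (\<lambda>c. induced P (G P U c)) cs))"
  then have i: "i < length cs" by simp
  have "induced Q (G P U (cs ! i)) \<in> coarsenings (induced P (G P U (cs ! i)))"
    using goodD[OF g] partP ncP finG GsubP by (intro induced_coarsening[where A="\<Union>P"]) auto
  then show "map (\<lambda>c. induced Q (G P U c)) cs ! i \<in> map coarsenings (map (\<lambda>c. induced P (G P U c)) cs) ! i"
    using i by simp
qed simp

lemma good_Qof_Phi:
  assumes g: "goodQ Q"
  shows "Qof P U (Phi P U Q) = Q"
proof -
  have "unstd (G P U (cs ! i)) (Phi P U Q ! i) = {\<tau>\<in>Q. \<tau> \<subseteq> G P U (cs ! i)}" if "i < length cs" for i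
  proof -
    have "Phi P U Q ! i = std (G P U (cs ! i)) (restr Q (G P U (cs ! i)))"
      using that by (simp add: Phi_def induced_def)
    moreover have "\<Union>(restr Q (G P U (cs ! i))) \<subseteq> G P U (cs ! i)" unfolding restr_def by auto
    ultimately show ?thesis using unstd_std[OF finG] good_restr[OF g] by simp
  qed
  then have "(\<Union>i<length (Phi P U Q). unstd (G P U (cs ! i)) (Phi P U Q ! i)) = (\<Union>i<length cs. {\<tau>\<in>Q. \<tau> \<subseteq> G P U (cs ! i)})"
    by (simp add: Phi_def)
  also have "\<dots> = (\<Union>c\<in>set cs. {\<tau>\<in>Q. \<tau> \<subseteq> G P U c})"
    by (rule UN_nth)
  also have "\<dots> = Q - {U}" using good_rest[OF g] .
  finally show ?thesis unfolding Qof_def using goodD(4)[OF g] by auto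
qed

lemma good_weight:
  assumes g: "goodQ Q"
  shows "charB K (quot P Q) = K (induced P U) * charB K (sum_list (map2 quot (uword P L) (Phi P U Q)))"
proof -
  have fQ: "finite Q" using goodD[OF g] by blast
  have 1: "charB K (quot (induced P (G P U c)) (induced Q (G P U c))) = (\<Prod>\<tau>\<in>{\<tau>\<in>Q. \<tau> \<subseteq> G P U c}. K (induced P \<tau>))" for c
  proof -
    let ?D = "G P U c"
    have inj: "inj_on ((`) (rank ?D)) (restr Q ?D)"
      by (rule inj_on_subset[OF inj_on_image_Pow[OF inj_rank[OF finG]]]) (auto simp: restr_def)
    have "charB K (quot (induced P ?D) (induced Q ?D)) = (\<Prod>\<tau>'\<in>induced Q ?D. K (induced (induced P ?D) \<tau>'))"
      by (rule charB_quot)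
    also have "\<dots> = (\<Prod>\<tau>\<in>restr Q ?D. K (induced (induced P ?D) (rank ?D ` \<tau>)))"
      unfolding induced_def[of Q] std_def using inj by (simp add: prod.reindex)
    also have "\<dots> = (\<Prod>\<tau>\<in>restr Q ?D. K (induced P \<tau>))"
      using induced_induced[OF finG] by (intro prod.cong) (auto simp: restr_def)
    finally show ?thesis using good_restr[OF g] by simp
  qed
  have "charB K (sum_list (map2 quot (uword P L) (Phi P U Q)))
      = prod_list (map (\<lambda>c. charB K (quot (induced P (G P U c)) (induced Q (G P U c)))) cs)"
    unfolding uwordL Phi_def by (rule charB_map2)
  also have "\<dots> = (\<Prod>c\<in>set cs. charB K (quot (induced P (G P U c)) (induced Q (G P U c))))"
    by (rule prod.distinct_set_conv_list[OF distinct_gcs, symmetric])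
  also have "\<dots> = (\<Prod>c\<in>set cs. \<Prod>\<tau>\<in>{\<tau>\<in>Q. \<tau> \<subseteq> G P U c}. K (induced P \<tau>))"
    using 1 by simp
  also have "\<dots> = (\<Prod>\<tau>\<in>(\<Union>c\<in>set cs. {\<tau>\<in>Q. \<tau> \<subseteq> G P U c}). K (induced P \<tau>))"
  proof (rule prod.UNION_disjoint[symmetric])
    show "finite (set cs)" by simp
    show "\<forall>c\<in>set cs. finite {\<tau>\<in>Q. \<tau> \<subseteq> G P U c}" using fQ by simp
    show "\<forall>c\<in>set cs. \<forall>d\<in>set cs. c \<noteq> d \<longrightarrow> {\<tau>\<in>Q. \<tau> \<subseteq> G P U c} \<inter> {\<tau>\<in>Q. \<tau> \<subseteq> G P U d} = {}"
    proof (intro ballI impI)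
      fix c d :: nat assume "c \<noteq> d"
      have "{} \<notin> Q" using goodD(1)[OF g] unfolding partition_on_def by blast
      show "{\<tau>\<in>Q. \<tau> \<subseteq> G P U c} \<inter> {\<tau>\<in>Q. \<tau> \<subseteq> G P U d} = {}"
      proof (rule ccontr)
        assume "{\<tau>\<in>Q. \<tau> \<subseteq> G P U c} \<inter> {\<tau>\<in>Q. \<tau> \<subseteq> G P U d} \<noteq> {}"
        then obtain \<tau> where t: "\<tau> \<in> Q" "\<tau> \<subseteq> G P U c" "\<tau> \<subseteq> G P U d" by blast
        then have "\<tau> \<subseteq> G P U c \<inter> G P U d" by blast
        then have "\<tau> = {}" using G_disjoint[OF \<open>c \<noteq> d\<close>, of P U] by blast
        then show False using t(1) \<open>{} \<notin> Q\<close> by simp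
      qed
    qed
  qed
  also have "\<dots> = (\<Prod>\<tau>\<in>Q - {U}. K (induced P \<tau>))" using good_rest[OF g] by simp
  finally have 2: "charB K (sum_list (map2 quot (uword P L) (Phi P U Q))) = (\<Prod>\<tau>\<in>Q - {U}. K (induced P \<tau>))" .
  show ?thesis unfolding charB_quot 2 using fQ goodD(4)[OF g] by (simp add: prod.remove)
qed


lemma listsetB:
  assumes B: "B \<in> listset (map coarsenings (uword P L))"
  shows "length B = length cs" "\<And>i. i < length cs \<Longrightarrow> B ! i \<in> coarsenings (induced P (G P U (cs ! i)))"
  using B unfolding in_listset_iff uwordL by auto

lemma Bprops:
  assumes B: "B \<in> listset (map coarsenings (uword P L))" and i: "i < length cs"
  shows "partition_on (G P U (cs ! i)) (unstd (G P U (cs ! i)) (B ! i))"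
    "noncrossing (unstd (G P U (cs ! i)) (B ! i))"
    "std (G P U (cs ! i)) (unstd (G P U (cs ! i)) (B ! i)) = B ! i"
    "refines (induced P (G P U (cs ! i))) (B ! i)"
proof -
  let ?D = "G P U (cs ! i)"
  have ncpi: "ncp (card ?D) (induced P ?D)"
    using ncp_induced[OF partP ncP GsubP finG] .
  have Bi: "B ! i \<in> coarsenings (induced P ?D)" using listsetB(2)[OF B i] .
  then have p: "partition_on {1..card ?D} (B ! i)" and nc: "noncrossing (B ! i)"
    and r: "refines (induced P ?D) (B ! i)"
    using ncp_union[OF ncpi] unfolding coarsenings_def by auto
  show "partition_on ?D (unstd ?D (B ! i))" "noncrossing (unstd ?D (B ! i))"
    "std ?D (unstd ?D (B ! i)) = B ! i"
    using unstd_props[OF finG p nc] by auto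
  show "refines (induced P ?D) (B ! i)" using r .
qed

lemma Qof_eq:
  assumes B: "B \<in> listset (map coarsenings (uword P L))"
  shows "Qof P U B = insert U (\<Union>i<length cs. unstd (G P U (cs ! i)) (B ! i))"
  unfolding Qof_def listsetB(1)[OF B] ..

lemma W_block:
  assumes B: "B \<in> listset (map coarsenings (uword P L))"
    and i: "i < length cs" and t: "\<tau> \<in> unstd (G P U (cs ! i)) (B ! i)"
  shows "\<tau> \<subseteq> G P U (cs ! i)" "\<tau> \<noteq> {}" "finite \<tau>" "Conv \<tau> \<inter> U = {}" "\<tau> \<noteq> U"
proof -
  show s: "\<tau> \<subseteq> G P U (cs ! i)" "\<tau> \<noteq> {}"
    using Bprops(1)[OF B i] t unfolding partition_on_def by auto
  show f: "finite \<tau>" using s(1) finG finite_subset by blast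
  show "Conv \<tau> \<inter> U = {}" using G_Conv[OF finU s(1) f s(2)] .
  show "\<tau> \<noteq> U" using s GU by blast
qed

lemma Qof_sub:
  assumes B: "B \<in> listset (map coarsenings (uword P L))" and i: "i < length cs"
  shows "{\<tau>\<in>Qof P U B. \<tau> \<subseteq> G P U (cs ! i)} = unstd (G P U (cs ! i)) (B ! i)"
proof (intro set_eqI iffI)
  fix \<tau> assume "\<tau> \<in> {\<tau>\<in>Qof P U B. \<tau> \<subseteq> G P U (cs ! i)}"
  then have t: "\<tau> \<in> Qof P U B" "\<tau> \<subseteq> G P U (cs ! i)" by auto
  have "\<tau> \<noteq> U"
  proof
    assume "\<tau> = U" then show False using t(2) GU Une by blast
  qed
  then obtain j where j: "j < length cs" "\<tau> \<in> unstd (G P U (cs ! j)) (B ! j)"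
    using t(1) unfolding Qof_eq[OF B] by blast
  have "i = j"
  proof (rule ccontr)
    assume "i \<noteq> j"
    then have "\<tau> = {}" using cs_distinct_G[OF i j(1)] t(2) W_block(1)[OF B j] by blast
    then show False using W_block(2)[OF B j] by simp
  qed
  then show "\<tau> \<in> unstd (G P U (cs ! i)) (B ! i)" using j by simp
next
  fix \<tau> assume t: "\<tau> \<in> unstd (G P U (cs ! i)) (B ! i)"
  then have "\<tau> \<in> Qof P U B" unfolding Qof_eq[OF B] using i by blast
  then show "\<tau> \<in> {\<tau>\<in>Qof P U B. \<tau> \<subseteq> G P U (cs ! i)}" using W_block(1)[OF B i t] by blast
qed

lemma Qof_good:
  assumes B: "B \<in> listset (map coarsenings (uword P L))"
  shows "goodQ (Qof P U B)"
proof -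
  define W where "W = (\<Union>i<length cs. unstd (G P U (cs ! i)) (B ! i))"
  have Q: "Qof P U B = insert U W" unfolding W_def Qof_eq[OF B] ..
  have Wb: "\<exists>i<length cs. \<tau> \<in> unstd (G P U (cs ! i)) (B ! i)" if "\<tau> \<in> W" for \<tau>
    using that unfolding W_def by blast
  have UW: "\<Union>W = \<Union>P - U"
  proof -
    have "\<Union>W = (\<Union>i<length cs. \<Union>(unstd (G P U (cs ! i)) (B ! i)))" unfolding W_def by blast
    also have "\<dots> = (\<Union>i<length cs. G P U (cs ! i))"
      using Bprops(1)[OF B] unfolding partition_on_def by simp
    also have "\<dots> = (\<Union>c\<in>set cs. G P U c)" by (rule UN_nth)
    finally show ?thesis using cover by simp
  qed
  have part: "partition_on (\<Union>P) (insert U W)"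
  proof (rule partition_onI)
    show "\<Union>(insert U W) = \<Union>P" using UW UP by blast
    show "{} \<notin> insert U W" using Une Wb W_block(2)[OF B] by blast
    fix p q assume pq: "p \<in> insert U W" "q \<in> insert U W" "p \<noteq> q"
    show "disjnt p q"
    proof (cases "p = U \<or> q = U")
      case True
      then have "p \<in> W \<or> q \<in> W" using pq by blast
      then show ?thesis using True pq(3) Wb W_block(1)[OF B] GU unfolding disjnt_def by blast
    next
      case False
      then obtain i j where i: "i < length cs" "p \<in> unstd (G P U (cs ! i)) (B ! i)"
        and j: "j < length cs" "q \<in> unstd (G P U (cs ! j)) (B ! j)"
        using pq Wb by blast
      show ?thesis
      proof (cases "i = j")
        case True
        have "disjoint (unstd (G P U (cs ! i)) (B ! i))" using partition_onD2[OF Bprops(1)[OF B i(1)]] .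
        moreover have "q \<in> unstd (G P U (cs ! i)) (B ! i)" using j True by simp
        ultimately show ?thesis using i(2) pq(3) by (metis pairwiseD)
      next
        case False
        then show ?thesis using cs_distinct_G[OF i(1) j(1)] W_block(1)[OF B i] W_block(1)[OF B j]
          unfolding disjnt_def by blast
      qed
    qed
  qed
  have nc: "noncrossing (insert U W)"
    unfolding noncrossing_def
  proof (intro ballI impI notI)
    fix B1 B2 assume b: "B1 \<in> insert U W" "B2 \<in> insert U W" "B1 \<noteq> B2"
      and "\<exists>a b c d. a \<in> B1 \<and> b \<in> B1 \<and> c \<in> B2 \<and> d \<in> B2 \<and> a < c \<and> c < b \<and> b < d"
    then obtain a bb c d where x: "a \<in> B1" "bb \<in> B1" "c \<in> B2" "d \<in> B2" "a < c" "c < bb" "bb < d"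
      by blast
    show False
    proof (cases "B1 = U")
      case True
      then have "B2 \<in> W" using b by blast
      then obtain j where j: "j < length cs" "B2 \<in> unstd (G P U (cs ! j)) (B ! j)" using Wb by blast
      have f: "finite B2" using W_block(3)[OF B j] .
      have "bb \<in> Conv B2" unfolding Conv_def using x Min_le[OF f x(3)] Max_ge[OF f x(4)] by auto
      then show False using W_block(4)[OF B j] True x(2) by blast
    next
      case B1: False
      then have "B1 \<in> W" using b by blast
      then obtain i where i: "i < length cs" "B1 \<in> unstd (G P U (cs ! i)) (B ! i)" using Wb by blast
      have f: "finite B1" using W_block(3)[OF B i] .
      show False
      proof (cases "B2 = U")
        case True
        have "c \<in> Conv B1" unfolding Conv_def using x Min_le[OF f x(1)] Max_ge[OF f x(2)] by auto
        then show False using W_block(4)[OF B i] True x(3) by blast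
      next
        case False
        then have "B2 \<in> W" using b by blast
        then obtain j where j: "j < length cs" "B2 \<in> unstd (G P U (cs ! j)) (B ! j)" using Wb by blast
        show False
        proof (cases "i = j")
          case True
          then show False using noncrossingD[OF Bprops(2)[OF B i(1)] i(2) _ b(3) x] j by simp
        next
          case False
          have ga: "gidx U a = cs ! i" "gidx U bb = cs ! i" "gidx U c = cs ! j"
            using W_block(1)[OF B i] W_block(1)[OF B j] x(1-3) unfolding G_def by auto
          have "gidx U a \<le> gidx U c" "gidx U c \<le> gidx U bb"
            using gidx_mono[OF finU] x(5,6) by auto
          then have "cs ! i = cs ! j" using ga by simp
          then have "i = j" using distinct_gcs i(1) j(1) by (simp add: nth_eq_iff_index_eq)
          then show False using False by simp
        qed
      qed
    qed
  qed
  have ref: "refines P (insert U W)"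
    unfolding refines_def
  proof
    fix \<pi> assume \<pi>: "\<pi> \<in> P"
    show "\<exists>C\<in>insert U W. \<pi> \<subseteq> C"
    proof (cases "\<pi> \<in> L")
      case True then show ?thesis by blast
    next
      case False
      then obtain c where c: "c \<in> set cs" "\<pi> \<subseteq> G P U c" using P_blocks[OF \<pi>] by blast
      then obtain i where i: "i < length cs" "cs ! i = c" by (auto simp: in_set_conv_nth)
      let ?D = "G P U (cs ! i)"
      have sub: "\<pi> \<subseteq> ?D" using c i by simp
      have ne: "\<pi> \<noteq> {}" using \<pi> nonempty_ncp_blocks[OF P] by blast
      have "\<pi> \<inter> ?D = \<pi>" using sub by blast
      then have "\<pi> \<in> restr P ?D" using \<pi> ne unfolding restr_def by force
      then have "rank ?D ` \<pi> \<in> induced P ?D" unfolding induced_def std_def by blast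
      then obtain b where b: "b \<in> B ! i" "rank ?D ` \<pi> \<subseteq> b"
        using Bprops(4)[OF B i(1)] unfolding refines_def by blast
      have "\<pi> \<subseteq> inv_into ?D (rank ?D) ` b"
      proof
        fix x assume "x \<in> \<pi>"
        then have "x = inv_into ?D (rank ?D) (rank ?D x)" "rank ?D x \<in> b"
          using inv_rank[OF finG] sub b(2) by auto
        then show "x \<in> inv_into ?D (rank ?D) ` b" by blast
      qed
      moreover have "inv_into ?D (rank ?D) ` b \<in> W"
        unfolding W_def unstd_def using i(1) b(1) by blast
      ultimately show ?thesis by blast
    qed
  qed
  have outer: "{U} \<in> cuts (insert U W)"
    using outer_iff[of U "insert U W"] Wb W_block(4)[OF B] by blast
  show ?thesis unfolding goodQ_def Q coarsenings_def using part nc ref outer by simp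
qed

lemma Phi_Qof:
  assumes B: "B \<in> listset (map coarsenings (uword P L))"
  shows "Phi P U (Qof P U B) = B"
proof (rule nth_equalityI)
  show "length (Phi P U (Qof P U B)) = length B" using listsetB(1)[OF B] by (simp add: Phi_def)
  fix i assume "i < length (Phi P U (Qof P U B))"
  then have i: "i < length cs" by (simp add: Phi_def)
  have "Phi P U (Qof P U B) ! i = std (G P U (cs ! i)) (restr (Qof P U B) (G P U (cs ! i)))"
    using i by (simp add: Phi_def induced_def)
  also have "restr (Qof P U B) (G P U (cs ! i)) = unstd (G P U (cs ! i)) (B ! i)"
    using good_restr[OF Qof_good[OF B]] Qof_sub[OF B i] by simp
  also have "std (G P U (cs ! i)) \<dots> = B ! i" using Bprops(3)[OF B i] .
  finally show "Phi P U (Qof P U B) ! i = B ! i" .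
qed

end


lemma Lof:
  assumes P: "nonempty_ncp P" and Q: "Q \<in> coarsenings P" and \<sigma>: "\<sigma> \<in> Q" and o: "{\<sigma>} \<in> cuts Q"
  shows "{\<pi>\<in>P. \<pi> \<subseteq> \<sigma>} \<in> cuts P" "{\<pi>\<in>P. \<pi> \<subseteq> \<sigma>} \<noteq> {}" "\<Union>{\<pi>\<in>P. \<pi> \<subseteq> \<sigma>} = \<sigma>"
proof -
  have pQ: "partition_on (\<Union>P) Q" and rQ: "refines P Q" using Q unfolding coarsenings_def by auto
  have finUP: "finite (\<Union>P)" using nonempty_ncpE2(3)[OF P] .
  have pP: "partition_on (\<Union>P) P" using nonempty_ncpE2(1)[OF P] .
  have sub: "\<pi> \<subseteq> \<sigma>" if \<pi>: "\<pi> \<in> P" "\<pi> \<inter> \<sigma> \<noteq> {}" for \<pi>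
  proof -
    obtain C where C: "C \<in> Q" "\<pi> \<subseteq> C" using rQ \<pi>(1) unfolding refines_def by blast
    have "C = \<sigma>"
    proof (rule ccontr)
      assume "C \<noteq> \<sigma>"
      then have "disjnt C \<sigma>" using partition_onD2[OF pQ] C(1) \<sigma> by (metis pairwiseD)
      then show False using C(2) \<pi>(2) unfolding disjnt_def by blast
    qed
    then show ?thesis using C by simp
  qed
  have step: "y \<subseteq> \<sigma>" if y: "y \<in> P" "Conv y \<inter> \<sigma> \<noteq> {}" for y
  proof -
    obtain C where C: "C \<in> Q" "y \<subseteq> C" using rQ y(1) unfolding refines_def by blast
    have yne: "y \<noteq> {}" using y(1) pP unfolding partition_on_def by blast
    have fC: "finite C" using C(1) pQ finUP unfolding partition_on_def by (metis Sup_upper finite_subset)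
    have fy: "finite y" using fC C(2) finite_subset by blast
    have "Min C \<le> Min y" using C(2) yne fy fC by (meson Min_in Min_le subsetD)
    moreover have "Max y \<le> Max C" using C(2) yne fy fC by (meson Max_in Max_ge subsetD)
    ultimately have "Conv y \<subseteq> Conv C" unfolding Conv_def by auto
    then have "Conv C \<inter> \<sigma> \<noteq> {}" using y(2) by blast
    then have "C = \<sigma>" using outer_iff[OF \<sigma>] o C(1) by blast
    then show ?thesis using C(2) by simp
  qed
  show U: "\<Union>{\<pi>\<in>P. \<pi> \<subseteq> \<sigma>} = \<sigma>"
  proof
    show "\<Union>{\<pi>\<in>P. \<pi> \<subseteq> \<sigma>} \<subseteq> \<sigma>" by blast
    show "\<sigma> \<subseteq> \<Union>{\<pi>\<in>P. \<pi> \<subseteq> \<sigma>}"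
    proof
      fix y assume y: "y \<in> \<sigma>"
      then have "y \<in> \<Union>P" using pQ \<sigma> unfolding partition_on_def by blast
      then obtain \<pi> where "\<pi> \<in> P" "y \<in> \<pi>" by blast
      then show "y \<in> \<Union>{\<pi>\<in>P. \<pi> \<subseteq> \<sigma>}" using sub y by blast
    qed
  qed
  show "{\<pi>\<in>P. \<pi> \<subseteq> \<sigma>} \<noteq> {}"
  proof
    assume e: "{\<pi>\<in>P. \<pi> \<subseteq> \<sigma>} = {}"
    have "\<sigma> = {}" using U unfolding e by (metis Union_empty)
    then show False using pQ \<sigma> unfolding partition_on_def by blast
  qed
  have "s \<in> {\<pi>\<in>P. \<pi> \<subseteq> \<sigma>}" if "arrow P s \<pi>" "\<pi> \<in> {\<pi>\<in>P. \<pi> \<subseteq> \<sigma>}" for s \<pi>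
    using that unfolding arrow_def
  proof (induction rule: converse_tranclp_induct)
    case (base y)
    then have "y \<in> P" "Conv y \<inter> \<sigma> \<noteq> {}" by auto
    then show ?case using step by blast
  next
    case (step y z)
    then have "y \<in> P" "Conv y \<inter> \<sigma> \<noteq> {}" by auto
    then show ?case using \<open>\<And>y. y \<in> P \<Longrightarrow> Conv y \<inter> \<sigma> \<noteq> {} \<Longrightarrow> y \<subseteq> \<sigma>\<close> by blast
  qed
  then show "{\<pi>\<in>P. \<pi> \<subseteq> \<sigma>} \<in> cuts P" unfolding cuts_def lowerset_def by blast
qed

lemma Lof_inv:
  assumes P: "nonempty_ncp P" and L: "L \<in> cuts P"
  shows "{\<pi>\<in>P. \<pi> \<subseteq> \<Union>L} = L"
proof (intro set_eqI iffI)
  have LP: "L \<subseteq> P" using cuts_subset[OF L] .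
  have pP: "partition_on (\<Union>P) P" using nonempty_ncpE2(1)[OF P] .
  fix \<pi> assume "\<pi> \<in> {\<pi>\<in>P. \<pi> \<subseteq> \<Union>L}"
  then have \<pi>: "\<pi> \<in> P" "\<pi> \<subseteq> \<Union>L" by auto
  have "\<pi> \<noteq> {}" using \<pi>(1) pP unfolding partition_on_def by blast
  then obtain y where y: "y \<in> \<pi>" by blast
  then obtain \<rho> where \<rho>: "\<rho> \<in> L" "y \<in> \<rho>" using \<pi>(2) by blast
  have "\<pi> = \<rho>"
  proof (rule ccontr)
    assume "\<pi> \<noteq> \<rho>"
    then have "disjnt \<pi> \<rho>" using partition_onD2[OF pP] \<pi>(1) \<rho>(1) LP by (metis pairwiseD subsetD)
    then show False using y \<rho>(2) unfolding disjnt_def by blast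
  qed
  then show "\<pi> \<in> L" using \<rho> by simp
next
  fix \<pi> assume "\<pi> \<in> L"
  then show "\<pi> \<in> {\<pi>\<in>P. \<pi> \<subseteq> \<Union>L}" using cuts_subset[OF L] by blast
qed

lemma uword_single:
  assumes Q: "Q \<in> coarsenings P" and f: "finite \<sigma>"
  shows "uword Q {\<sigma>} = Phi P \<sigma> Q"
proof -
  have UQ: "\<Union>Q = \<Union>P" using Q unfolding coarsenings_def partition_on_def by auto
  have GQ: "G Q \<sigma> = G P \<sigma>" unfolding G_def UQ ..
  have "uword Q {\<sigma>} = map (\<lambda>c. induced Q (G Q (\<Union>{\<sigma>}) c)) (gcs Q (\<Union>{\<sigma>}))"
    by (rule uword_eq) (simp add: f)
  then show ?thesis unfolding Phi_def gcs_def by (simp add: GQ)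
qed

lemma C1:
  assumes Q: "nonempty_ncp Q"
  shows "(\<Sum>L\<in>cuts Q. e_char (lword Q L) * g (uword Q L)) = (\<Sum>\<sigma>\<in>{\<sigma>\<in>Q. {\<sigma>} \<in> cuts Q}. g (uword Q {\<sigma>}))"
proof -
  let ?I = "(\<lambda>\<sigma>. {\<sigma>}) ` {\<sigma>\<in>Q. {\<sigma>} \<in> cuts Q}"
  have fQ: "finite Q" using nonempty_ncp_finite[OF Q] .
  have fc: "finite (cuts Q)" using finite_cuts[OF fQ] .
  have pQ: "partition_on (\<Union>Q) Q" using nonempty_ncpE2(1)[OF Q] .
  have ev: "e_char (lword Q L) = (if L \<in> ?I then 1 else 0)" if L: "L \<in> cuts Q" for L
  proof (cases "L = {}")
    case True then show ?thesis by (auto simp: e_char_def)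
  next
    case False
    have LQ: "L \<subseteq> Q" using cuts_subset[OF L] .
    have fU: "finite (\<Union>L)" using LQ fQ pQ nonempty_ncpE2(3)[OF Q] by (meson Sup_subset_mono finite_subset)
    have r: "restr Q (\<Union>L) = L"
    proof (intro set_eqI iffI)
      fix X assume "X \<in> restr Q (\<Union>L)"
      then obtain B where B: "B \<in> Q" "X = B \<inter> \<Union>L" "X \<noteq> {}" unfolding restr_def by blast
      then obtain C y where C: "C \<in> L" "y \<in> B" "y \<in> C" by blast
      have "B = C"
      proof (rule ccontr)
        assume "B \<noteq> C"
        then have "disjnt B C" using partition_onD2[OF pQ] B(1) C(1) LQ by (metis pairwiseD subsetD)
        then show False using C unfolding disjnt_def by blast
      qed
      then show "X \<in> L" using B C(1) by (simp add: Int_absorb2 Sup_upper)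
    next
      fix X assume X: "X \<in> L"
      then have "X \<noteq> {}" using LQ pQ unfolding partition_on_def by blast
      moreover have "X \<inter> \<Union>L = X" using X by blast
      ultimately show "X \<in> restr Q (\<Union>L)" using X LQ unfolding restr_def by force
    qed
    have "card (induced Q (\<Union>L)) = card L"
    proof -
      have "inj_on ((`) (rank (\<Union>L))) L"
        by (rule inj_on_subset[OF inj_on_image_Pow[OF inj_rank[OF fU]]]) blast
      then show ?thesis unfolding induced_def std_def r by (simp add: card_image)
    qed
    moreover have "card L = 1 \<longleftrightarrow> L \<in> ?I"
    proof
      assume "card L = 1"
      then obtain \<sigma> where "L = {\<sigma>}" by (auto simp: card_1_singleton_iff)
      then show "L \<in> ?I" using L LQ by auto
    next
      assume "L \<in> ?I" then show "card L = 1" by auto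
    qed
    ultimately show ?thesis using False by (simp add: lword_nonempty e_char_def)
  qed
  have "(\<Sum>L\<in>cuts Q. e_char (lword Q L) * g (uword Q L)) = (\<Sum>L\<in>cuts Q. if L \<in> ?I then g (uword Q L) else 0)"
  proof (rule sum.cong[OF refl])
    fix L assume L: "L \<in> cuts Q"
    show "e_char (lword Q L) * g (uword Q L) = (if L \<in> ?I then g (uword Q L) else 0)"
      by (subst ev[OF L]) simp
  qed
  also have "\<dots> = (\<Sum>L\<in>cuts Q \<inter> ?I. g (uword Q L))"
    by (rule sum.inter_restrict[OF fc, symmetric])
  also have "cuts Q \<inter> ?I = ?I" by auto
  also have "(\<Sum>L\<in>?I. g (uword Q L)) = (\<Sum>\<sigma>\<in>{\<sigma>\<in>Q. {\<sigma>} \<in> cuts Q}. g (uword Q {\<sigma>}))"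
    by (subst sum.reindex) (auto simp: inj_on_def)
  finally show ?thesis .
qed

lemma core:
  fixes \<kappa> :: "ncpart list \<Rightarrow> 'a::field_char_0" and K :: "ncpart \<Rightarrow> 'a"
  assumes \<kappa>: "is_inf_character \<kappa>" and K: "\<forall>P. nonempty_ncp P \<longrightarrow> K P = \<kappa> [P]" and P: "nonempty_ncp P"
  shows "(\<Sum>Q\<in>coarsenings P. charB K (quot P Q) * (\<Sum>L\<in>cuts Q. e_char (lword Q L) * g (uword Q L)))
       = (\<Sum>L\<in>cuts P. \<kappa> (lword P L) * act g K (uword P L))"
proof -
  have finUP: "finite (\<Union>P)" using nonempty_ncpE2(3)[OF P] .
  have finC: "finite (coarsenings P)" using finite_coarsenings[OF P] .
  have finQ: "finite Q" if "Q \<in> coarsenings P" for Q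
    using nonempty_ncp_finite[OF coarsening_ncp[OF P that]] .
  have fin\<sigma>: "finite \<sigma>" if "Q \<in> coarsenings P" "\<sigma> \<in> Q" for Q \<sigma>
  proof -
    have "\<sigma> \<subseteq> \<Union>P" using that unfolding coarsenings_def partition_on_def by blast
    then show ?thesis using finUP finite_subset by blast
  qed
  have finLS: "finite (listset (map coarsenings (uword P L)))" for L
    using valid_uword[OF P, of L] finite_coarsenings
    by (intro finite_listset) (auto simp: valid_word_def list_all_iff)
  have fincuts: "finite (cuts P - {{}})" using finite_cuts[OF nonempty_ncp_finite[OF P]] by simp
  define S where "S = Sigma (coarsenings P) (\<lambda>Q. {\<sigma>\<in>Q. {\<sigma>} \<in> cuts Q})"
  define T where "T = Sigma (cuts P - {{}}) (\<lambda>L. listset (map coarsenings (uword P L)))"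
  define gS where "gS = (\<lambda>(Q, \<sigma>). charB K (quot P Q) * g (Phi P \<sigma> Q))"
  define hT where "hT = (\<lambda>(L, B). K (induced P (\<Union>L)) * (g B * charB K (sum_list (map2 quot (uword P L) B))))"
  have "(\<Sum>Q\<in>coarsenings P. charB K (quot P Q) * (\<Sum>L\<in>cuts Q. e_char (lword Q L) * g (uword Q L)))
      = (\<Sum>Q\<in>coarsenings P. \<Sum>\<sigma>\<in>{\<sigma>\<in>Q. {\<sigma>} \<in> cuts Q}. charB K (quot P Q) * g (Phi P \<sigma> Q))"
  proof (rule sum.cong[OF refl])
    fix Q assume Q: "Q \<in> coarsenings P"
    have "(\<Sum>L\<in>cuts Q. e_char (lword Q L) * g (uword Q L)) = (\<Sum>\<sigma>\<in>{\<sigma>\<in>Q. {\<sigma>} \<in> cuts Q}. g (Phi P \<sigma> Q))"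
      unfolding C1[OF coarsening_ncp[OF P Q]] using uword_single[OF Q] fin\<sigma>[OF Q] by (intro sum.cong) auto
    then show "charB K (quot P Q) * (\<Sum>L\<in>cuts Q. e_char (lword Q L) * g (uword Q L))
        = (\<Sum>\<sigma>\<in>{\<sigma>\<in>Q. {\<sigma>} \<in> cuts Q}. charB K (quot P Q) * g (Phi P \<sigma> Q))"
      by (simp add: sum_distrib_left)
  qed
  also have "\<dots> = sum gS S"
    unfolding S_def gS_def using finC finQ by (subst sum.Sigma) auto
  also have "sum gS S = sum hT T"
  proof (rule sum.reindex_bij_witness[where j = "\<lambda>(Q, \<sigma>). ({\<pi>\<in>P. \<pi> \<subseteq> \<sigma>}, Phi P \<sigma> Q)"
        and i = "\<lambda>(L, B). (Qof P (\<Union>L) B, \<Union>L)"])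
    fix a assume a: "a \<in> S"
    then obtain Q \<sigma> where a': "a = (Q, \<sigma>)" "Q \<in> coarsenings P" "\<sigma> \<in> Q" "{\<sigma>} \<in> cuts Q"
      unfolding S_def by auto
    note Lf = Lof[OF P a'(2-4)]
    let ?L = "{\<pi>\<in>P. \<pi> \<subseteq> \<sigma>}"
    have good: "goodQ P ?L Q" unfolding goodQ_def[OF P Lf(1,2)] Lf(3) using a' by auto
    have "Qof P (\<Union>?L) (Phi P (\<Union>?L) Q) = Q" by (rule good_Qof_Phi[OF P Lf(1,2) good])
    then show "(\<lambda>(L, B). (Qof P (\<Union>L) B, \<Union>L)) ((\<lambda>(Q, \<sigma>). ({\<pi>\<in>P. \<pi> \<subseteq> \<sigma>}, Phi P \<sigma> Q)) a) = a"
      using a' Lf(3) by simp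
    have "Phi P (\<Union>?L) Q \<in> listset (map coarsenings (uword P ?L))" by (rule good_Phi[OF P Lf(1,2) good])
    then show "(\<lambda>(Q, \<sigma>). ({\<pi>\<in>P. \<pi> \<subseteq> \<sigma>}, Phi P \<sigma> Q)) a \<in> T"
      unfolding T_def using a' Lf by simp
    have w: "charB K (quot P Q) = K (induced P (\<Union>?L)) * charB K (sum_list (map2 quot (uword P ?L) (Phi P (\<Union>?L) Q)))"
      by (rule good_weight[OF P Lf(1,2) good])
    show "hT ((\<lambda>(Q, \<sigma>). ({\<pi>\<in>P. \<pi> \<subseteq> \<sigma>}, Phi P \<sigma> Q)) a) = gS a"
      unfolding hT_def gS_def using a' w Lf(3) by (simp add: mult_ac)
  next
    fix b assume b: "b \<in> T"
    then obtain L B where b': "b = (L, B)" "L \<in> cuts P" "L \<noteq> {}" "B \<in> listset (map coarsenings (uword P L))"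
      unfolding T_def by auto
    have good: "goodQ P L (Qof P (\<Union>L) B)" by (rule Qof_good[OF P b'(2,3,4)])
    show "(\<lambda>(Q, \<sigma>). ({\<pi>\<in>P. \<pi> \<subseteq> \<sigma>}, Phi P \<sigma> Q)) ((\<lambda>(L, B). (Qof P (\<Union>L) B, \<Union>L)) b) = b"
      using b' Lof_inv[OF P b'(2)] Phi_Qof[OF P b'(2,3,4)] by simp
    show "(\<lambda>(L, B). (Qof P (\<Union>L) B, \<Union>L)) b \<in> S"
      using good unfolding goodQ_def[OF P b'(2,3)] S_def b'(1) by simp
  qed
  also have "sum hT T = (\<Sum>L\<in>cuts P - {{}}. \<Sum>B\<in>listset (map coarsenings (uword P L)).
      K (induced P (\<Union>L)) * (g B * charB K (sum_list (map2 quot (uword P L) B))))"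
    unfolding T_def hT_def using fincuts finLS by (subst sum.Sigma) auto
  also have "\<dots> = (\<Sum>L\<in>cuts P - {{}}. \<kappa> (lword P L) * act g K (uword P L))"
  proof (rule sum.cong[OF refl])
    fix L assume L: "L \<in> cuts P - {{}}"
    have "nonempty_ncp (induced P (\<Union>L))" using valid_lword[OF P, of L] L by (simp add: lword_nonempty)
    then have "\<kappa> (lword P L) = K (induced P (\<Union>L))" using K L by (simp add: lword_nonempty)
    then show "(\<Sum>B\<in>listset (map coarsenings (uword P L)). K (induced P (\<Union>L)) * (g B * charB K (sum_list (map2 quot (uword P L) B))))
        = \<kappa> (lword P L) * act g K (uword P L)"
      unfolding act_def by (simp add: sum_distrib_left)
  qed
  also have "\<dots> = (\<Sum>L\<in>cuts P. \<kappa> (lword P L) * act g K (uword P L))"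
  proof -
    have "(\<Sum>L\<in>cuts P. \<kappa> (lword P L) * act g K (uword P L))
        = \<kappa> (lword P {}) * act g K (uword P {}) + (\<Sum>L\<in>cuts P - {{}}. \<kappa> (lword P L) * act g K (uword P L))"
      using finite_cuts[OF nonempty_ncp_finite[OF P]] cuts_empty by (rule sum.remove)
    then show ?thesis using \<kappa> by (simp add: is_inf_character_def)
  qed
  finally show ?thesis .
qed




lemma e_inf: "is_inf_character e_char"
  unfolding is_inf_character_def
proof (intro conjI allI impI)
  show "e_char [] = 0" by (simp add: e_char_def)
  fix u v :: "ncpart list" assume "valid_word u \<and> valid_word v \<and> u \<noteq> [] \<and> v \<noteq> []"
  then obtain a u' b v' where "u = a#u'" "v = b#v'" by (metis list.exhaust)
  then show "e_char (u @ v) = 0" by (simp add: e_char_def split: list.split)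
qed

lemma act_zero: "act (\<lambda>v. 0) K w = 0"
  by (simp add: act_def)

lemma act_counit: "act counit K w = counit w"
proof (cases w)
  case Nil then show ?thesis by (simp add: act_Nil)
next
  case (Cons P w')
  have "act counit K (P#w') = (\<Sum>Q\<in>coarsenings P. charB K (quot P Q) * act (\<lambda>v. counit (Q#v)) K w')"
    by (rule act_Cons)
  also have "\<dots> = 0" by (simp add: act_zero)
  finally show ?thesis using Cons by simp
qed

context
  fixes \<kappa> :: "ncpart list \<Rightarrow> 'a::field_char_0" and K :: "ncpart \<Rightarrow> 'a"
  assumes \<kappa>: "is_inf_character \<kappa>" and K: "\<forall>P. nonempty_ncp P \<longrightarrow> K P = \<kappa> [P]"
begin

lemma key:
  "valid_word w \<Longrightarrow> act (conv e_char g) K w = conv \<kappa> (act g K) w"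
proof (induction w arbitrary: g)
  case Nil
  then show ?case using \<kappa> by (simp add: act_Nil conv_Nil e_char_def is_inf_character_def)
next
  case (Cons P w)
  have P: "nonempty_ncp P" and w: "valid_word w" using Cons.prems by auto
  define g' where "g' = (\<lambda>x. act (\<lambda>y. g (x @ y)) K w)"
  have A: "act (\<lambda>v. conv e_char g (Q#v)) K w =
      (\<Sum>L\<in>cuts Q. e_char (lword Q L) * g' (uword Q L)) + conv \<kappa> (act (\<lambda>v'. g (Q#v')) K) w"
    if Q: "Q \<in> coarsenings P" for Q
  proof -
    have Qn: "nonempty_ncp Q" using coarsening_ncp[OF P Q] .
    have "act (\<lambda>v. conv e_char g (Q#v)) K w
        = act (\<lambda>v. (\<Sum>L\<in>cuts Q. e_char (lword Q L) * g (uword Q L @ v)) + conv e_char (\<lambda>v'. g (Q#v')) v) K w"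
      by (rule act_cong) (simp add: conv_rec[OF e_inf Qn] valid_coarsenings[OF w])
    also have "\<dots> = (\<Sum>L\<in>cuts Q. e_char (lword Q L) * act (\<lambda>v. g (uword Q L @ v)) K w)
        + act (conv e_char (\<lambda>v'. g (Q#v'))) K w"
      by (simp add: act_add act_sum act_scale)
    also have "act (conv e_char (\<lambda>v'. g (Q#v'))) K w = conv \<kappa> (act (\<lambda>v'. g (Q#v')) K) w"
      by (rule Cons.IH[OF w])
    finally show ?thesis unfolding g'_def .
  qed
  have "act (conv e_char g) K (P#w) = (\<Sum>Q\<in>coarsenings P. charB K (quot P Q) * act (\<lambda>v. conv e_char g (Q#v)) K w)"
    by (rule act_Cons)
  also have "\<dots> = (\<Sum>Q\<in>coarsenings P. charB K (quot P Q) * (\<Sum>L\<in>cuts Q. e_char (lword Q L) * g' (uword Q L)))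
     + (\<Sum>Q\<in>coarsenings P. charB K (quot P Q) * conv \<kappa> (act (\<lambda>v'. g (Q#v')) K) w)"
    using A by (simp add: distrib_left sum.distrib)
  also have "(\<Sum>Q\<in>coarsenings P. charB K (quot P Q) * (\<Sum>L\<in>cuts Q. e_char (lword Q L) * g' (uword Q L)))
     = (\<Sum>L\<in>cuts P. \<kappa> (lword P L) * act g' K (uword P L))"
    by (rule core[OF \<kappa> K P])
  also have "(\<Sum>L\<in>cuts P. \<kappa> (lword P L) * act g' K (uword P L))
     = (\<Sum>L\<in>cuts P. \<kappa> (lword P L) * act g K (uword P L @ w))"
    unfolding g'_def by (simp add: act_append)
  also have "(\<Sum>Q\<in>coarsenings P. charB K (quot P Q) * conv \<kappa> (act (\<lambda>v'. g (Q#v')) K) w)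
     = conv \<kappa> (\<lambda>v. act g K (P#v)) w"
    by (simp add: act_Cons conv_sum_right conv_scale_right)
  also have "(\<Sum>L\<in>cuts P. \<kappa> (lword P L) * act g K (uword P L @ w)) + conv \<kappa> (\<lambda>v. act g K (P#v)) w
     = conv \<kappa> (act g K) (P#w)"
    by (rule conv_rec[OF \<kappa> P w, symmetric])
  finally show ?case .
qed

lemma act_pow:
  "valid_word w \<Longrightarrow> act (conv_pow e_char m) K w = conv_pow \<kappa> m w"
proof (induction m arbitrary: w)
  case 0 then show ?case by (simp add: act_counit)
next
  case (Suc m)
  have "act (conv_pow e_char (Suc m)) K w = conv \<kappa> (act (conv_pow e_char m) K) w"
    using key[OF Suc.prems] by simp
  also have "\<dots> = conv \<kappa> (conv_pow \<kappa> m) w"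
    by (rule conv_cong) (auto intro!: Suc.IH valid_uwords[OF Suc.prems])
  finally show ?case by simp
qed

lemma main_eq:
  assumes w: "valid_word w"
  shows "act (exp_conv e_char) K w = exp_conv \<kappa> w"
proof -
  define N where "N = wsize w"
  have "act (exp_conv e_char) K w = act (\<lambda>Qs. \<Sum>m\<le>N. conv_pow e_char m Qs / fact m) K w"
  proof (rule act_cong)
    fix Qs assume Qs: "Qs \<in> listset (map coarsenings w)"
    show "exp_conv e_char Qs = (\<Sum>m\<le>N. conv_pow e_char m Qs / fact m)"
      using exp_conv_fin[OF e_inf valid_coarsenings[OF w Qs], of N] wsize_coarsenings[OF Qs] N_def by simp
  qed
  also have "\<dots> = (\<Sum>m\<le>N. act (conv_pow e_char m) K w / fact m)"
    by (simp add: act_sum act_divide)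
  also have "\<dots> = (\<Sum>m\<le>N. conv_pow \<kappa> m w / fact m)"
    using act_pow[OF w] by simp
  also have "\<dots> = exp_conv \<kappa> w"
    using exp_conv_fin[OF \<kappa> w, of N] N_def by simp
  finally show ?thesis .
qed

end

theorem mainTheorem15:
  fixes \<kappa> \<phi> :: "ncpart list \<Rightarrow> 'a::field_char_0" and K :: "ncpart \<Rightarrow> 'a"
  assumes "is_inf_character \<kappa>"
    and "\<forall>P. nonempty_ncp P \<longrightarrow> K P = \<kappa> [P]"
    and "is_character \<phi>"
  shows "(\<forall>w. valid_word w \<longrightarrow> \<phi> w = exp_conv \<kappa> w) \<longleftrightarrow>
         (\<forall>w. valid_word w \<longrightarrow> \<phi> w = act (exp_conv e_char) K w)"
  using main_eq[OF assms(1,2)] by auto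



end
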